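(* Lebesgue-almost everywhere, \[ \lim_{n\to\infty}\frac{\sum_{k=1}^n\mathsf a'_k}{\sum_{k=1}^n\mathsf a_k}=0 . \]
   Context: $I=(0,1]$, $\mathsf a_n(x)$ denotes the $n$-th continued fraction digit of $x\in I$. $\mathbb P$ is the set of primes. The prime digits are $\mathsf a'_n(x):=\mathsf a_n(x)$ if $\mathsf a_n(x)\in\mathbb P$ and $\mathsf a'_n(x):=0$ otherwise. *)

theory Defs
  imports "HOL-Analysis.Analysis" "HOL-Computational_Algebra.Primes"
begin

text \<open>Gauss map on [0,1]: T x = frac (1/x) for x > 0, and T 0 = 0 (digits after
termination of a rational expansion are 0; this only matters on a null set).\<close>
definition gauss_map :: "real \<Rightarrow> real" where
  "gauss_map x = (if x = 0 then 0 else frac (1 / x))"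

definition cf_digit :: "nat \<Rightarrow> real \<Rightarrow> nat" where
  "cf_digit n x = nat \<lfloor>1 / (gauss_map ^^ (n - 1)) x\<rfloor>"

definition prime_cf_digit :: "nat \<Rightarrow> real \<Rightarrow> nat" where
  "prime_cf_digit n x = (if prime (cf_digit n x) then cf_digit n x else 0)"

end

theory Submission
  imports Defs "HOL-Real_Asymp.Real_Asymp"
begin


definition dg :: "real \<Rightarrow> nat" where "dg y = nat \<lfloor>1 / y\<rfloor>"
definition ww :: "real \<Rightarrow> real" where "ww y = 1 / (1 + y)"
definition qq :: "nat \<Rightarrow> real \<Rightarrow> real" where "qq k y = 1 / ((real k + y) * (real k + 1 + y))"

lemma cf_digit_eq: "cf_digit k x = dg ((gauss_map ^^ (k - 1)) x)"
  by (simp add: cf_digit_def dg_def)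

lemma gauss_map_meas[measurable]: "gauss_map \<in> borel_measurable borel"
  unfolding gauss_map_def frac_def by measurable

lemma dg_real_meas: "(\<lambda>y. real (dg y)) \<in> borel_measurable borel"
  unfolding dg_def by measurable

lemma dg_meas[measurable]: "dg \<in> borel \<rightarrow>\<^sub>M count_space UNIV"
proof -
  have "dg -` {a} \<in> sets borel" for a
  proof -
    have "dg -` {a} = (\<lambda>y. real (dg y)) -` {real a}" by auto
    also have "\<dots> \<in> sets borel" using measurable_sets[OF dg_real_meas, of "{real a}"] by simp
    finally show ?thesis .
  qed
  then show ?thesis by (subst measurable_count_space_eq2_countable) auto
qed

lemma funpow_meas[measurable]: "(gauss_map ^^ n) \<in> borel_measurable borel"
  by (induction n) auto

lemma sub_piece:
  fixes H :: "real \<Rightarrow> ennreal"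
  assumes H[measurable]: "H \<in> borel_measurable borel" and k: "k \<ge> (1::nat)"
  shows "(\<integral>\<^sup>+x. H (1/x - real k) * ennreal (ww x) * indicator {1/(real k+1)<..<1/real k} x \<partial>lborel)
       = (\<integral>\<^sup>+y. H y * ennreal (qq k y) * indicator {0<..<1} y \<partial>lborel)"
proof -
  define f where "f x = H (1/x - real k) * ennreal (ww x)" for x
  define g where "g s = 1 / (real k + 1 - s)" for s :: real
  define g' where "g' s = 1 / (real k + 1 - s)^2" for s :: real
  have kpos: "real k \<ge> 1" using k by simp
  have fm[measurable]: "f \<in> borel_measurable borel" unfolding f_def ww_def by measurable
  have "(\<integral>\<^sup>+x. H (1/x - real k) * ennreal (ww x) * indicator {1/(real k+1)<..<1/real k} x \<partial>lborel)
      = (\<integral>\<^sup>+x. f x * indicator {g 0..g 1} x \<partial>lborel)"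
  proof (rule nn_integral_cong_AE)
    show "AE x in lborel. H (1/x - real k) * ennreal (ww x) * indicator {1/(real k+1)<..<1/real k} x = f x * indicator {g 0..g 1} x"
      using AE_lborel_singleton[of "1/(real k+1)"] AE_lborel_singleton[of "1/real k"]
      by eventually_elim (auto simp: f_def g_def indicator_def)
  qed
  also have "\<dots> = (\<integral>\<^sup>+s. f (g s) * g' s * indicator {0..1} s \<partial>lborel)"
  proof (rule nn_integral_substitution_aux)
    fix x :: real assume x: "x \<in> {0..1}"
    then have nz: "real k + 1 - x \<noteq> 0" using kpos by auto
    show "(g has_real_derivative g' x) (at x)"
      unfolding g_def g'_def using nz
      by (auto intro!: derivative_eq_intros simp: power2_eq_square field_simps)
    show "g' x \<ge> 0" unfolding g'_def by simp
  next
    show "continuous_on {0..1} g'" unfolding g'_def using kpos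
      by (intro continuous_intros) auto
  qed (use fm in auto)
  also have "\<dots> = (\<integral>\<^sup>+s. H (1 - s) * ennreal (qq k (1 - s)) * indicator {0..1} s \<partial>lborel)"
  proof (rule nn_integral_cong)
    fix s :: real
    show "f (g s) * ennreal (g' s) * indicator {0..1} s = H (1 - s) * ennreal (qq k (1 - s)) * indicator {0..1} s"
    proof (cases "s \<in> {0..1}")
      case True
      then have nz: "real k + 1 - s > 0" "real k + 2 - s > 0" using kpos by auto
      have e1: "1 / g s - real k = 1 - s" unfolding g_def by simp
      have e2: "ww (g s) * g' s = qq k (1 - s)"
      proof -
        define u where "u = real k + 1 - s"
        have u: "u > 0" using nz u_def by simp
        have "ww (g s) * g' s = (1 / (1 + 1/u)) * (1 / u^2)" unfolding ww_def g_def g'_def u_def by simp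
        also have "\<dots> = 1 / (u * (u + 1))" using u by (simp add: field_simps power2_eq_square)
        also have "\<dots> = qq k (1 - s)" unfolding qq_def u_def by (simp add: algebra_simps)
        finally show ?thesis .
      qed
      have "f (g s) * ennreal (g' s) = H (1 - s) * ennreal (ww (g s) * g' s)"
      proof -
        have "ww (g s) \<ge> 0" "g' s \<ge> 0" unfolding ww_def g_def g'_def using nz by auto
        then have "ennreal (ww (g s)) * ennreal (g' s) = ennreal (ww (g s) * g' s)"
          by (simp add: ennreal_mult)
        then show ?thesis unfolding f_def e1 by (simp add: mult.assoc)
      qed
      then show ?thesis using e2 by simp
    qed simp
  qed
  also have "\<dots> = (\<integral>\<^sup>+y. H y * ennreal (qq k y) * indicator {0..1} y \<partial>lborel)"
  proof -
    have "(\<integral>\<^sup>+y. H y * ennreal (qq k y) * indicator {0..1} y \<partial>lborel)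
        = ennreal \<bar>-1\<bar> * (\<integral>\<^sup>+s. H (1 + (-1) * s) * ennreal (qq k (1 + (-1) * s)) * indicator {0..1} (1 + (-1) * s) \<partial>lborel)"
      by (rule nn_integral_real_affine) (auto simp: qq_def)
    also have "\<dots> = (\<integral>\<^sup>+s. H (1 - s) * ennreal (qq k (1 - s)) * indicator {0..1} s \<partial>lborel)"
      by (auto intro!: nn_integral_cong simp: indicator_def)
    finally show ?thesis by simp
  qed
  also have "\<dots> = (\<integral>\<^sup>+y. H y * ennreal (qq k y) * indicator {0<..<1} y \<partial>lborel)"
  proof (rule nn_integral_cong_AE)
    show "AE y in lborel. H y * ennreal (qq k y) * indicator {0..1} y = H y * ennreal (qq k y) * indicator {0<..<1} y"
      using AE_lborel_singleton[of 0] AE_lborel_singleton[of 1]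
      by eventually_elim (auto simp: indicator_def)
  qed
  finally show ?thesis .
qed

lemma piece_vals:
  assumes x: "x \<in> {1/(real (Suc k)+1)<..<1/real (Suc k)}"
  shows "dg x = Suc k" "gauss_map x = 1/x - real (Suc k)"
proof -
  have xpos: "x > 0" using x by (auto simp: less_le_trans[of 0 "1/(real (Suc k)+1)"])
  have a: "1/x > real (Suc k)" using x xpos by (auto simp: field_simps)
  have b: "1/x < real (Suc k) + 1" using x xpos by (auto simp: field_simps)
  have fl: "\<lfloor>1/x\<rfloor> = int (Suc k)" using a b by (simp add: floor_eq_iff)
  show "dg x = Suc k" unfolding dg_def fl by simp
  show "gauss_map x = 1/x - real (Suc k)" unfolding gauss_map_def frac_def using xpos fl by simp
qed

lemma union_pieces:
  assumes "x \<in> {0<..<1}" "\<forall>k. x \<noteq> 1 / (real k + 1)"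
  shows "x \<in> (\<Union>k. {1/(real (Suc k)+1)<..<1/real (Suc k)})"
proof -
  have xp: "x > 0" "x < 1" using assms by auto
  define m where "m = nat \<lfloor>1/x\<rfloor>"
  have gt1: "1/x > 1" using xp by (simp add: field_simps)
  have fl: "\<lfloor>1/x\<rfloor> \<ge> 1" using gt1 by (simp add: le_floor_iff)
  have fl0: "\<lfloor>1/x\<rfloor> \<ge> 0" using fl by linarith
  have im: "int m = \<lfloor>1/x\<rfloor>" unfolding m_def using fl0 by (simp add: int_nat_eq)
  have mr: "real m = of_int \<lfloor>1/x\<rfloor>" using im by (metis of_int_of_nat_eq)
  have m1: "m \<ge> 1" using fl im by linarith
  have le: "real m \<le> 1/x" using mr by simp
  have lt: "1/x < real m + 1" using mr by linarith
  have ne: "1/x \<noteq> real m"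
  proof
    assume "1/x = real m"
    then have "x = 1 / (real (m - 1) + 1)" using m1 xp by (simp add: of_nat_diff field_simps)
    then show False using assms(2) by blast
  qed
  have lt2: "real m < 1/x" using le ne by simp
  have "x \<in> {1/(real (Suc (m-1))+1)<..<1/real (Suc (m-1))}"
    using m1 lt lt2 xp by (auto simp: field_simps of_nat_diff)
  then show ?thesis by blast
qed

lemma key_lemma:
  fixes H :: "real \<Rightarrow> ennreal" and g :: "nat \<Rightarrow> ennreal"
  assumes H[measurable]: "H \<in> borel_measurable borel"
    and hyp: "\<And>y. y \<in> {0<..<1} \<Longrightarrow> (\<Sum>k. g (Suc k) * ennreal (qq (Suc k) y)) \<le> c * ennreal (ww y)"
  shows "(\<integral>\<^sup>+x. indicator {0<..<1} x * g (dg x) * H (gauss_map x) * ennreal (ww x) \<partial>lborel)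
       \<le> c * (\<integral>\<^sup>+y. indicator {0<..<1} y * H y * ennreal (ww y) \<partial>lborel)"
proof -
  define B where "B k = {1/(real (Suc k)+1)<..<1/real (Suc k)}" for k
  define F where "F x = g (dg x) * H (gauss_map x) * ennreal (ww x)" for x
  have Fm[measurable]: "F \<in> borel_measurable borel" unfolding F_def ww_def by measurable
  have Bm[measurable]: "B k \<in> sets borel" for k unfolding B_def by simp
  have "(\<integral>\<^sup>+x. indicator {0<..<1} x * g (dg x) * H (gauss_map x) * ennreal (ww x) \<partial>lborel)
      = (\<integral>\<^sup>+x \<in> (\<Union>k. B k). F x \<partial>lborel)"
  proof (rule nn_integral_cong_AE)
    have "AE x in lborel. \<forall>k::nat. x \<noteq> 1 / (real k + 1)"
      by (subst AE_all_countable) (auto intro: AE_lborel_singleton)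
    then show "AE x in lborel. indicator {0<..<1} x * g (dg x) * H (gauss_map x) * ennreal (ww x) = F x * indicator (\<Union>k. B k) x"
    proof eventually_elim
      case (elim x)
      have "x \<in> {0<..<1} \<longleftrightarrow> x \<in> (\<Union>k. B k)"
      proof
        assume "x \<in> {0<..<1}" then show "x \<in> (\<Union>k. B k)" using union_pieces elim unfolding B_def by blast
      next
        assume "x \<in> (\<Union>k. B k)"
        then obtain k where "x \<in> B k" by blast
        then have 1: "1/(real (Suc k)+1) < x" and 2: "x < 1/real (Suc k)" unfolding B_def by auto
        have "0 < x" by (rule less_trans[OF _ 1]) simp
        moreover have "x < 1" by (rule less_le_trans[OF 2]) simp
        ultimately show "x \<in> {0<..<1}" by auto
      qed
      then show ?case unfolding F_def by (auto simp: indicator_def)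
    qed
  qed
  also have "\<dots> = (\<Sum>k. (\<integral>\<^sup>+x \<in> B k. F x \<partial>lborel))"
  proof (rule nn_integral_disjoint_family)
    show "disjoint_family B"
    unfolding disjoint_family_on_def
    proof (intro ballI impI)
      fix k l :: nat assume "k \<noteq> l"
      show "B k \<inter> B l = {}"
      proof (cases "k < l")
        case True
        then have "1/real (Suc l) \<le> 1/(real (Suc k)+1)" by (simp add: field_simps)
        then show ?thesis unfolding B_def by auto
      next
        case False
        then have "l < k" using \<open>k \<noteq> l\<close> by simp
        then have "1/real (Suc k) \<le> 1/(real (Suc l)+1)" by (simp add: field_simps)
        then show ?thesis unfolding B_def by auto
      qed
    qed
  qed auto
  also have "\<dots> = (\<Sum>k. g (Suc k) * (\<integral>\<^sup>+y. H y * ennreal (qq (Suc k) y) * indicator {0<..<1} y \<partial>lborel))"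
  proof (rule suminf_cong)
    fix k
    have "(\<integral>\<^sup>+x \<in> B k. F x \<partial>lborel) = (\<integral>\<^sup>+x. g (Suc k) * (H (1/x - real (Suc k)) * ennreal (ww x) * indicator (B k) x) \<partial>lborel)"
      by (rule nn_integral_cong) (auto simp: F_def indicator_def piece_vals[unfolded B_def] B_def mult_ac)
    also have "\<dots> = g (Suc k) * (\<integral>\<^sup>+x. H (1/x - real (Suc k)) * ennreal (ww x) * indicator (B k) x \<partial>lborel)"
      by (rule nn_integral_cmult) (simp add: ww_def)
    also have "\<dots> = g (Suc k) * (\<integral>\<^sup>+y. H y * ennreal (qq (Suc k) y) * indicator {0<..<1} y \<partial>lborel)"
      using sub_piece[OF H, of "Suc k"] unfolding B_def by simp
    finally show "(\<integral>\<^sup>+x \<in> B k. F x \<partial>lborel) = \<dots>" .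
  qed
  also have "\<dots> = (\<Sum>k. (\<integral>\<^sup>+y. g (Suc k) * (H y * ennreal (qq (Suc k) y) * indicator {0<..<1} y) \<partial>lborel))"
    by (rule suminf_cong, rule nn_integral_cmult[symmetric]) (simp add: qq_def)
  also have "\<dots> = (\<integral>\<^sup>+y. (\<Sum>k. g (Suc k) * (H y * ennreal (qq (Suc k) y) * indicator {0<..<1} y)) \<partial>lborel)"
    by (rule nn_integral_suminf[symmetric]) (simp add: qq_def)
  also have "\<dots> \<le> (\<integral>\<^sup>+y. c * (indicator {0<..<1} y * H y * ennreal (ww y)) \<partial>lborel)"
  proof (rule nn_integral_mono)
    fix y
    have "(\<Sum>k. g (Suc k) * (H y * ennreal (qq (Suc k) y) * indicator {0<..<1} y))
        = (\<Sum>k. g (Suc k) * ennreal (qq (Suc k) y)) * (H y * indicator {0<..<1} y)"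
      by (subst ennreal_suminf_multc[symmetric]) (simp add: mult_ac)
    also have "\<dots> \<le> c * (indicator {0<..<1} y * H y * ennreal (ww y))"
    proof (cases "y \<in> {0<..<1}")
      case True
      have "(\<Sum>k. g (Suc k) * ennreal (qq (Suc k) y)) * H y \<le> c * ennreal (ww y) * H y"
        using hyp[OF True] by (rule mult_right_mono) simp
      then show ?thesis using True by (simp add: mult_ac)
    qed simp
    finally show "(\<Sum>k. g (Suc k) * (H y * ennreal (qq (Suc k) y) * indicator {0<..<1} y)) \<le> c * (indicator {0<..<1} y * H y * ennreal (ww y))" .
  qed
  also have "\<dots> = c * (\<integral>\<^sup>+y. indicator {0<..<1} y * H y * ennreal (ww y) \<partial>lborel)"
    by (rule nn_integral_cmult) (simp add: ww_def)
  finally show ?thesis .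
qed

lemma prod_lemma:
  fixes g :: "nat \<Rightarrow> nat \<Rightarrow> ennreal" and c :: "nat \<Rightarrow> ennreal" and H :: "real \<Rightarrow> ennreal"
  assumes hyp: "\<And>i y. y \<in> {0<..<1} \<Longrightarrow> (\<Sum>k. g i (Suc k) * ennreal (qq (Suc k) y)) \<le> c i * ennreal (ww y)"
    and H[measurable]: "H \<in> borel_measurable borel"
  shows "(\<integral>\<^sup>+x. indicator {0<..<1} x * (\<Prod>i<n. g i (dg ((gauss_map ^^ i) x))) * H ((gauss_map ^^ n) x) * ennreal (ww x) \<partial>lborel)
       \<le> (\<Prod>i<n. c i) * (\<integral>\<^sup>+y. indicator {0<..<1} y * H y * ennreal (ww y) \<partial>lborel)"
  using hyp
proof (induction n arbitrary: g c)
  case 0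
  then show ?case by simp
next
  case (Suc n)
  define H' where "H' y = (\<Prod>i<n. g (Suc i) (dg ((gauss_map ^^ i) y))) * H ((gauss_map ^^ n) y)" for y
  have H'm[measurable]: "H' \<in> borel_measurable borel" unfolding H'_def by measurable
  have eq: "indicator {0<..<1} x * (\<Prod>i<Suc n. g i (dg ((gauss_map ^^ i) x))) * H ((gauss_map ^^ Suc n) x) * ennreal (ww x)
      = indicator {0<..<1} x * g 0 (dg x) * H' (gauss_map x) * ennreal (ww x)" for x
    unfolding H'_def prod.lessThan_Suc_shift funpow_Suc_right comp_def by (simp add: mult_ac)
  have "(\<integral>\<^sup>+x. indicator {0<..<1} x * (\<Prod>i<Suc n. g i (dg ((gauss_map ^^ i) x))) * H ((gauss_map ^^ Suc n) x) * ennreal (ww x) \<partial>lborel)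
      = (\<integral>\<^sup>+x. indicator {0<..<1} x * g 0 (dg x) * H' (gauss_map x) * ennreal (ww x) \<partial>lborel)"
    by (simp only: eq)
  also have "\<dots> \<le> c 0 * (\<integral>\<^sup>+y. indicator {0<..<1} y * H' y * ennreal (ww y) \<partial>lborel)"
    by (rule key_lemma[OF H'm Suc.prems])
  also have "\<dots> \<le> c 0 * ((\<Prod>i<n. c (Suc i)) * (\<integral>\<^sup>+y. indicator {0<..<1} y * H y * ennreal (ww y) \<partial>lborel))"
  proof (rule mult_left_mono)
    show "(\<integral>\<^sup>+y. indicator {0<..<1} y * H' y * ennreal (ww y) \<partial>lborel) \<le> (\<Prod>i<n. c (Suc i)) * (\<integral>\<^sup>+y. indicator {0<..<1} y * H y * ennreal (ww y) \<partial>lborel)"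
    proof -
      have "(\<integral>\<^sup>+x. indicator {0<..<1} x * (\<Prod>i<n. g (Suc i) (dg ((gauss_map ^^ i) x))) * H ((gauss_map ^^ n) x) * ennreal (ww x) \<partial>lborel)
       \<le> (\<Prod>i<n. c (Suc i)) * (\<integral>\<^sup>+y. indicator {0<..<1} y * H y * ennreal (ww y) \<partial>lborel)"
        by (rule Suc.IH) (rule Suc.prems)
      then show ?thesis unfolding H'_def by (simp add: mult_ac)
    qed
  qed simp
  also have "\<dots> = (\<Prod>i<Suc n. c i) * (\<integral>\<^sup>+y. indicator {0<..<1} y * H y * ennreal (ww y) \<partial>lborel)"
    unfolding prod.lessThan_Suc_shift by (simp add: mult_ac)
  finally show ?case .
qed




lemma primes_prod_dvd:
  fixes A :: "nat set"
  assumes "finite A" "\<And>p. p \<in> A \<Longrightarrow> prime p \<and> p dvd m"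
  shows "\<Prod>A dvd m"
  using assms
proof (induction A rule: finite_induct)
  case empty then show ?case by simp
next
  case (insert p A)
  have cop: "coprime p (\<Prod>A)"
  proof (rule prod_coprime_right)
    fix q assume "q \<in> A"
    then have "prime q" "q \<noteq> p" using insert by auto
    then show "coprime p q" using insert.prems[of p] by (simp add: primes_coprime)
  qed
  have "\<Prod>A dvd m" using insert by auto
  moreover have "p dvd m" using insert.prems[of p] by simp
  ultimately show ?case using insert cop by (simp add: divides_mult)
qed

lemma primes_block_card:
  fixes N :: nat assumes "N \<ge> 1"
  shows "real (card {p. prime p \<and> N < p \<and> p \<le> 2*N}) * ln (real N) \<le> real N * ln 4"
proof -
  define A where "A = {p. prime p \<and> N < p \<and> p \<le> 2*N}"
  have fin: "finite A" unfolding A_def by (rule finite_subset[of _ "{..2*N}"]) auto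
  have dv: "\<Prod>A dvd (2*N choose N)"
  proof (rule primes_prod_dvd[OF fin])
    fix p assume p: "p \<in> A"
    then have pr: "prime p" and gt: "N < p" and le: "p \<le> 2*N" unfolding A_def by auto
    have "p dvd fact (2*N)" using pr le by (simp add: prime_dvd_fact_iff)
    then have "p dvd fact N * fact N * (2*N choose N)"
      using binomial_fact_lemma[of N "2*N"] by simp
    moreover have "\<not> p dvd fact N" using pr gt by (simp add: prime_dvd_fact_iff)
    ultimately show "prime p \<and> p dvd (2*N choose N)"
      using pr by (simp add: prime_dvd_mult_iff)
  qed
  have pos: "(2*N choose N) > 0" by simp
  have "\<Prod>A \<le> (2*N choose N)" using dv pos by (simp add: dvd_imp_le)
  also have "\<dots> \<le> 2^(2*N)" by (rule binomial_le_pow2)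
  also have "\<dots> = 4^N" by (simp add: power_mult)
  finally have p4: "\<Prod>A \<le> 4^N" .
  have "N ^ card A = (\<Prod>p\<in>A. N)" by simp
  also have "\<dots> \<le> \<Prod>A" by (rule prod_mono) (auto simp: A_def)
  finally have "N ^ card A \<le> 4^N" using p4 by linarith
  then have "real N ^ card A \<le> 4 ^ N" by (metis of_nat_le_iff of_nat_power of_nat_numeral)
  then have "ln (real N ^ card A) \<le> ln (4 ^ N)" using assms by (subst ln_le_cancel_iff) auto
  then show ?thesis unfolding A_def[symmetric] using assms by (simp add: ln_realpow)
qed

lemma primes_block_card':
  fixes N :: nat assumes "N \<ge> 2"
  shows "real (card {p. prime p \<and> N < p \<and> p \<le> 2*N}) \<le> 2 * ln 2 * real N / ln (real N)"
proof -
  have l: "ln (real N) > 0" using assms by simp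
  have "ln (4::real) = 2 * ln 2" using ln_realpow[of 2 2] by simp
  then show ?thesis using primes_block_card[of N] assms l by (simp add: field_simps)
qed

lemma primes_fin: "finite {p::nat. prime p \<and> P p \<and> p \<le> M}"
  by (rule finite_subset[of _ "{..M}"]) auto

lemma recip_primes_pow2:
  "(\<Sum>p\<in>{p. prime p \<and> p \<le> 2^Suc m}. 1 / real p) \<le> 1/2 + 2 * harm m"
proof (induction m)
  case 0
  have "{p. prime p \<and> p \<le> (2::nat)^Suc 0} = {2}"
  proof (intro set_eqI iffI)
    fix x :: nat assume "x \<in> {p. prime p \<and> p \<le> 2^Suc 0}"
    then have "prime x" "x \<le> 2" by auto
    then show "x \<in> {2}" using prime_ge_2_nat[of x] by simp
  qed simp
  then show ?case by (simp add: harm_def)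
next
  case (Suc m)
  define N where "N = (2::nat)^Suc m"
  have N2: "N \<ge> 2" unfolding N_def by (metis le_add2 power_increasing one_le_numeral power_one_right Suc_eq_plus1 add.commute)
  have split: "{p. prime p \<and> p \<le> 2^Suc (Suc m)} = {p. prime p \<and> p \<le> N} \<union> {p. prime p \<and> N < p \<and> p \<le> 2*N}"
    unfolding N_def by auto
  have "(\<Sum>p\<in>{p. prime p \<and> p \<le> 2^Suc (Suc m)}. 1 / real p)
      = (\<Sum>p\<in>{p. prime p \<and> p \<le> N}. 1 / real p) + (\<Sum>p\<in>{p. prime p \<and> N < p \<and> p \<le> 2*N}. 1 / real p)"
    unfolding split
    by (rule sum.union_disjoint) (auto intro: finite_subset[of _ "{..N}"] finite_subset[of _ "{..2*N}"])
  also have "(\<Sum>p\<in>{p. prime p \<and> N < p \<and> p \<le> 2*N}. 1 / real p)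
      \<le> real (card {p. prime p \<and> N < p \<and> p \<le> 2*N}) * (1 / real N)"
    by (rule sum_bounded_above) (auto simp: field_simps)
  also have "\<dots> \<le> (2 * ln 2 * real N / ln (real N)) * (1 / real N)"
    by (rule mult_right_mono[OF primes_block_card'[OF N2]]) simp
  also have "\<dots> = 2 / real (Suc m)"
  proof -
    have "real N = 2 ^ Suc m" unfolding N_def by simp
    then have lnN: "ln (real N) = real (Suc m) * ln 2" by (simp only: ln_realpow)
    have "(2 * ln 2 * real N / ln (real N)) * (1 / real N) = 2 * ln 2 / ln (real N)" using N2 by simp
    also have "\<dots> = 2 / real (Suc m)" unfolding lnN by simp
    finally show ?thesis .
  qed
  finally have st: "(\<Sum>p\<in>{p. prime p \<and> p \<le> 2^Suc (Suc m)}. 1 / real p) \<le> (\<Sum>p\<in>{p. prime p \<and> p \<le> N}. 1 / real p) + 2 / real (Suc m)" by simp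
  have h: "harm (Suc m) = harm m + 1 / real (Suc m)" by (simp add: harm_Suc inverse_eq_divide)
  show ?case using st Suc.IH h unfolding N_def by linarith
qed

lemma recip_sq_primes:
  fixes N :: nat assumes N: "N \<ge> 2"
  shows "(\<Sum>p\<in>{p. prime p \<and> N < p \<and> p \<le> N * 2^m}. 1 / real p ^ 2) \<le> 4 * ln 2 / (real N * ln (real N)) * (1 - (1/2)^m)"
proof (induction m)
  case 0
  have e: "{p. prime p \<and> N < p \<and> p \<le> N * 2^0} = {}" by auto
  show ?case by (subst e) simp
next
  case (Suc m)
  define M where "M = N * 2^m"
  have M2: "M \<ge> 2" unfolding M_def using N by (metis mult_le_mono one_le_numeral one_le_power mult.right_neutral)
  have lN: "ln (real N) > 0" using N by simp
  have split: "{p. prime p \<and> N < p \<and> p \<le> N * 2^Suc m} = {p. prime p \<and> N < p \<and> p \<le> M} \<union> {p. prime p \<and> M < p \<and> p \<le> 2*M}"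
  proof -
    have "N \<le> M" unfolding M_def by simp
    moreover have "N * 2^Suc m = 2 * M" unfolding M_def by simp
    ultimately show ?thesis by (auto simp del: mult_2 power_Suc)
  qed
  have "(\<Sum>p\<in>{p. prime p \<and> N < p \<and> p \<le> N * 2^Suc m}. 1 / real p ^ 2)
      = (\<Sum>p\<in>{p. prime p \<and> N < p \<and> p \<le> M}. 1 / real p ^ 2) + (\<Sum>p\<in>{p. prime p \<and> M < p \<and> p \<le> 2*M}. 1 / real p ^ 2)"
    unfolding split
    by (rule sum.union_disjoint) (auto intro: finite_subset[of _ "{..M}"] finite_subset[of _ "{..2*M}"])
  also have "(\<Sum>p\<in>{p. prime p \<and> M < p \<and> p \<le> 2*M}. 1 / real p ^ 2)
      \<le> real (card {p. prime p \<and> M < p \<and> p \<le> 2*M}) * (1 / real M ^ 2)"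
    by (rule sum_bounded_above) (auto simp: field_simps power_mono)
  also have "\<dots> \<le> (2 * ln 2 * real M / ln (real M)) * (1 / real M ^ 2)"
    by (rule mult_right_mono[OF primes_block_card'[OF M2]]) simp
  also have "\<dots> \<le> 2 * ln 2 / (real N * 2^m * ln (real N))"
  proof -
    have MN: "real M = real N * 2^m" unfolding M_def by simp
    have "ln (real N) \<le> ln (real M)" using MN N by simp
    then have "2 * ln 2 / (real M * ln (real M)) \<le> 2 * ln 2 / (real M * ln (real N))"
      using lN M2 by (intro divide_left_mono mult_left_mono) auto
    moreover have "(2 * ln 2 * real M / ln (real M)) * (1 / real M ^ 2) = 2 * ln 2 / (real M * ln (real M))"
      using M2 by (simp add: field_simps power2_eq_square)
    ultimately show ?thesis using MN by simp
  qed
  finally have st: "(\<Sum>p\<in>{p. prime p \<and> N < p \<and> p \<le> N * 2^Suc m}. 1 / real p ^ 2)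
     \<le> (\<Sum>p\<in>{p. prime p \<and> N < p \<and> p \<le> M}. 1 / real p ^ 2) + 2 * ln 2 / (real N * 2^m * ln (real N))" by simp
  define C where "C = 4 * ln 2 / (real N * ln (real N))"
  have e: "2 * ln 2 / (real N * 2^m * ln (real N)) = C * (1/2)^Suc m"
    unfolding C_def by (simp add: field_simps power_divide)
  have "C * (1 - (1/2)^m) + C * (1/2)^Suc m = C * (1 - (1/2)^Suc m)"
    by (simp add: field_simps)
  then show ?case using st Suc.IH unfolding M_def C_def[symmetric] e by linarith
qed




lemma ww_bounds: assumes "0 < y" "y < 1" shows "1/2 \<le> ww y" "ww y \<le> 1" "0 < ww y"
  using assms unfolding ww_def by (auto simp: field_simps)

lemma qq_facts:
  assumes y: "0 < y" "y < 1" and k: "k \<ge> 1"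
  shows "0 \<le> qq k y" "qq k y \<le> 2 * ww y / real k ^ 2"
    "ww y / ((real k + 1) * (real k + 2)) \<le> qq k y"
proof -
  have k1: "real k \<ge> 1" using k by simp
  show "0 \<le> qq k y" unfolding qq_def using y k1 by simp
  have "qq k y \<le> 1 / real k ^ 2"
    unfolding qq_def using y k1 by (intro divide_left_mono) (auto simp: power2_eq_square intro!: mult_mono)
  also have "\<dots> \<le> 2 * ww y / real k ^ 2" using ww_bounds[OF y] k1 by (intro divide_right_mono) auto
  finally show "qq k y \<le> 2 * ww y / real k ^ 2" .
  have "ww y / ((real k + 1) * (real k + 2)) \<le> 1 / ((real k + 1) * (real k + 2))"
    using ww_bounds[OF y] k1 by (intro divide_right_mono) auto
  also have "\<dots> \<le> qq k y"
    unfolding qq_def using y k1 by (intro divide_left_mono) (auto intro!: mult_mono)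
  finally show "ww y / ((real k + 1) * (real k + 2)) \<le> qq k y" .
qed

lemma qq_sums: assumes "0 \<le> y" shows "(\<lambda>k. qq (Suc k) y) sums ww y"
proof -
  define f where "f n = 1 / (real n + 1 + y)" for n
  have "f \<longlonglongrightarrow> 0" unfolding f_def using assms
    by real_asymp
  then have "(\<lambda>n. f n - f (Suc n)) sums (f 0 - 0)" by (rule telescope_sums')
  moreover have "f n - f (Suc n) = qq (Suc n) y" for n
    unfolding f_def qq_def using assms by (simp add: field_simps)
  moreover have "f 0 = ww y" unfolding f_def ww_def by (simp add: add.commute)
  ultimately show ?thesis by simp
qed

lemma event_bound:
  assumes [measurable]: "E \<in> sets borel"
  shows "emeasure lborel ({0<..<1} \<inter> E) \<le> 2 * (\<integral>\<^sup>+x. indicator {0<..<1} x * indicator E x * ennreal (ww x) \<partial>lborel)"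
proof -
  have "emeasure lborel ({0<..<1} \<inter> E) = (\<integral>\<^sup>+x. indicator ({0<..<1} \<inter> E) x \<partial>lborel)" by simp
  also have "\<dots> \<le> (\<integral>\<^sup>+x. 2 * (indicator {0<..<1} x * indicator E x * ennreal (ww x)) \<partial>lborel)"
  proof (rule nn_integral_mono)
    fix x show "indicator ({0<..<1} \<inter> E) x \<le> 2 * (indicator {0<..<1} x * indicator E x * ennreal (ww x) :: ennreal)"
    proof (cases "x \<in> {0<..<1} \<inter> E")
      case True
      then have "1/2 \<le> ww x" using ww_bounds by auto
      then have "1 \<le> 2 * ww x" by simp
      then have "ennreal 1 \<le> ennreal (2 * ww x)" by (rule ennreal_leI)
      moreover have e: "ennreal (2 * ww x) = 2 * ennreal (ww x)" using ennreal_mult[of 2 "ww x"] \<open>1/2 \<le> ww x\<close> by simp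
      ultimately have "1 \<le> 2 * ennreal (ww x)" by (metis ennreal_1)
      then show ?thesis using True by simp
    qed simp
  qed
  also have "\<dots> = 2 * (\<integral>\<^sup>+x. indicator {0<..<1} x * indicator E x * ennreal (ww x) \<partial>lborel)"
    by (rule nn_integral_cmult) (simp add: ww_def)
  finally show ?thesis .
qed

lemma ww_int: "(\<integral>\<^sup>+y. indicator {0<..<1} y * 1 * ennreal (ww y) \<partial>lborel) \<le> 1"
proof -
  have "(\<integral>\<^sup>+y. indicator {0<..<1} y * 1 * ennreal (ww y) \<partial>lborel) \<le> (\<integral>\<^sup>+y. indicator {0<..<1::real} y * 1 \<partial>lborel)"
  proof (rule nn_integral_mono)
    fix y show "indicator {0<..<1} y * 1 * ennreal (ww y) \<le> (indicator {0<..<1} y * 1 :: ennreal)"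
      using ww_bounds[of y] by (cases "y \<in> {0<..<1}") auto
  qed
  also have "\<dots> = 1" by simp
  finally show ?thesis .
qed

lemma hyp_real:
  fixes h :: "nat \<Rightarrow> real"
  assumes h: "\<And>k. 0 \<le> h k" and y: "0 < y" "y < 1"
    and sm: "summable (\<lambda>k. h (Suc k) * qq (Suc k) y)"
    and le: "(\<Sum>k. h (Suc k) * qq (Suc k) y) \<le> C * ww y"
  shows "(\<Sum>k. ennreal (h (Suc k)) * ennreal (qq (Suc k) y)) \<le> ennreal C * ennreal (ww y)"
proof -
  have nn: "0 \<le> h (Suc k) * qq (Suc k) y" for k using h qq_facts(1)[OF y, of "Suc k"] by simp
  have "(\<Sum>k. ennreal (h (Suc k)) * ennreal (qq (Suc k) y)) = (\<Sum>k. ennreal (h (Suc k) * qq (Suc k) y))"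
    using h qq_facts(1)[OF y] by (simp add: ennreal_mult)
  also have "\<dots> = ennreal (\<Sum>k. h (Suc k) * qq (Suc k) y)" by (rule suminf_ennreal2[OF nn sm])
  also have "\<dots> \<le> ennreal (C * ww y)" using le by (rule ennreal_leI)
  also have "\<dots> = ennreal C * ennreal (ww y)" using ww_bounds[OF y] by (simp add: ennreal_mult'')
  finally show ?thesis .
qed

lemma summable_bdd_qq:
  fixes h :: "nat \<Rightarrow> real"
  assumes "\<And>k. 0 \<le> h k" "\<And>k. h k \<le> B" "0 \<le> y"
  shows "summable (\<lambda>k. h (Suc k) * qq (Suc k) y)"
proof (rule summable_comparison_test')
  show "summable (\<lambda>k. B * qq (Suc k) y)" using qq_sums[OF assms(3)] by (intro summable_mult) (auto simp: sums_iff)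
  fix k :: nat
  have "0 \<le> qq (Suc k) y" unfolding qq_def using assms(3) by simp
  then show "norm (h (Suc k) * qq (Suc k) y) \<le> B * qq (Suc k) y"
    using assms(1,2)[of "Suc k"] by (simp add: mult_right_mono)
qed

lemma one_minus_exp_ge: fixes u :: real assumes "0 \<le> u" "u \<le> 1" shows "u / 3 \<le> 1 - exp (- u)"
proof -
  have "1 + u \<le> exp u" using exp_ge_add_one_self[of u] by simp
  then have a: "exp (-u) * (1 + u) \<le> 1" by (simp add: exp_minus field_simps)
  have "exp (-1) \<le> exp (-u)" using assms by simp
  moreover have "1/3 \<le> exp (-1::real)" using exp_le by (simp add: exp_minus field_simps)
  ultimately have "1/3 \<le> exp (-u)" by linarith
  then have "u / 3 \<le> u * exp (-u)" using assms by (simp add: mult_left_mono[of "1/3" "exp (-u)" u, simplified])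
  then show ?thesis using a by (simp add: algebra_simps)
qed

lemma lower_hyp:
  fixes t :: real and M :: nat
  assumes t: "0 < t" "t * real M \<le> 1" and y: "0 < y" "y < 1"
  defines "D \<equiv> (\<Sum>k<M. (1 - exp (- t * real (Suc k))) / ((real (Suc k) + 1) * (real (Suc k) + 2)))"
  shows "summable (\<lambda>k. exp (- t * real (Suc k)) * qq (Suc k) y)"
    and "(\<Sum>k. exp (- t * real (Suc k)) * qq (Suc k) y) \<le> (1 - D) * ww y"
    and "t * harm M / 18 \<le> D"
proof -
  define u where "u k = qq (Suc k) y" for k
  define v where "v k = exp (- t * real (Suc k)) * u k" for k
  define w where "w k = (1 - exp (- t * real (Suc k))) * u k" for k
  have us: "u sums ww y" unfolding u_def using qq_sums y by simp
  have u0: "0 \<le> u k" for k unfolding u_def using qq_facts(1)[OF y, of "Suc k"] by simp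
  have e1: "exp (- t * real (Suc k)) \<le> 1" for k using t by simp
  show sv: "summable (\<lambda>k. exp (- t * real (Suc k)) * qq (Suc k) y)"
    by (rule summable_bdd_qq[where B=1, of "\<lambda>k. exp (- t * real k)"]) (use t y in auto)
  have sw: "summable w"
    unfolding w_def u_def by (rule summable_bdd_qq[where B=1, of "\<lambda>k. 1 - exp (- t * real k)"]) (use t y in auto)
  have "(\<lambda>k. u k - w k) sums (ww y - suminf w)" using us sw by (intro sums_diff) (auto simp: summable_sums)
  moreover have "u k - w k = v k" for k unfolding v_def w_def by (simp add: algebra_simps)
  ultimately have vs: "v sums (ww y - suminf w)" by simp
  have w0: "0 \<le> w k" for k unfolding w_def using u0 e1 by simp
  have "(\<Sum>k<M. w k) \<le> suminf w" using sw w0 by (intro sum_le_suminf) auto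
  moreover have "D * ww y \<le> (\<Sum>k<M. w k)"
    unfolding D_def sum_distrib_right
  proof (rule sum_mono)
    fix k assume "k \<in> {..<M}"
    have "ww y / ((real (Suc k) + 1) * (real (Suc k) + 2)) \<le> u k" unfolding u_def by (rule qq_facts(3)[OF y]) simp
    moreover have "0 \<le> 1 - exp (- t * real (Suc k))" using e1 by simp
    ultimately have "(1 - exp (- t * real (Suc k))) * (ww y / ((real (Suc k) + 1) * (real (Suc k) + 2))) \<le> (1 - exp (- t * real (Suc k))) * u k"
      by (rule mult_left_mono)
    then show "(1 - exp (- t * real (Suc k))) / ((real (Suc k) + 1) * (real (Suc k) + 2)) * ww y \<le> w k"
      unfolding w_def by (simp add: field_simps)
  qed
  ultimately have "D * ww y \<le> suminf w" by linarith
  then show "(\<Sum>k. exp (- t * real (Suc k)) * qq (Suc k) y) \<le> (1 - D) * ww y"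
    using vs unfolding v_def u_def by (simp add: sums_iff algebra_simps)
  have "t * harm M / 18 = (\<Sum>k<M. t / (18 * real (Suc k)))"
    by (simp add: harm_altdef sum_divide_distrib sum_distrib_left inverse_eq_divide field_simps)
  also have "\<dots> \<le> D" unfolding D_def
  proof (rule sum_mono)
    fix k assume k: "k \<in> {..<M}"
    define a where "a = real (Suc k)"
    have a1: "a \<ge> 1" unfolding a_def by simp
    have "t * a \<le> t * real M" using k t unfolding a_def by (intro mult_left_mono) auto
    then have ta: "t * a \<le> 1" using t by linarith
    have "t * a / 3 \<le> 1 - exp (- (t * a))" using ta t a1 by (intro one_minus_exp_ge) auto
    moreover have "(a + 1) * (a + 2) \<le> 6 * a^2"
    proof -
      have "0 \<le> (5*a+2)*(a-1)" using a1 by simp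
      moreover have "(a + 1) * (a + 2) = 6 * a^2 - (5*a+2)*(a-1)" by (simp add: power2_eq_square algebra_simps)
      ultimately show ?thesis by linarith
    qed
    moreover have "(a + 1) * (a + 2) > 0" using a1 by simp
    ultimately have "t * a / 3 / (6 * a^2) \<le> (1 - exp (- (t * a))) / ((a + 1) * (a + 2))"
      using t a1 by (intro frac_le) auto
    moreover have "t * a / 3 / (6 * a^2) = t / (18 * a)" using a1 by (simp add: power2_eq_square field_simps)
    ultimately show "t / (18 * real (Suc k)) \<le> (1 - exp (- t * real (Suc k))) / ((real (Suc k) + 1) * (real (Suc k) + 2))"
      unfolding a_def by simp
  qed
  finally show "t * harm M / 18 \<le> D" .
qed

lemma lower_tail:
  fixes A :: real
  assumes n: "n \<ge> 1"
  shows "emeasure lborel ({0<..<1} \<inter> {x. (\<Sum>i<n. real (dg ((gauss_map ^^ i) x))) < A})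
    \<le> ennreal (2 * exp (A / real n - harm n / 18))"
proof -
  define t where "t = 1 / real n"
  have t: "0 < t" "t * real n \<le> 1" unfolding t_def using n by auto
  define D where "D = (\<Sum>k<n. (1 - exp (- t * real (Suc k))) / ((real (Suc k) + 1) * (real (Suc k) + 2)))"
  define g where "g i k = ennreal (exp (- t * real k))" for i k :: nat
  define E where "E = {x. (\<Sum>i<n. real (dg ((gauss_map ^^ i) x))) < A}"
  have Em[measurable]: "E \<in> sets borel" unfolding E_def by measurable
  have "emeasure lborel ({0<..<1} \<inter> E) \<le> 2 * (\<integral>\<^sup>+x. indicator {0<..<1} x * indicator E x * ennreal (ww x) \<partial>lborel)"
    by (rule event_bound[OF Em])
  also have "(\<integral>\<^sup>+x. indicator {0<..<1} x * indicator E x * ennreal (ww x) \<partial>lborel)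
      \<le> (\<integral>\<^sup>+x. ennreal (exp (t * A)) * (indicator {0<..<1} x * (\<Prod>i<n. g i (dg ((gauss_map ^^ i) x))) * 1 * ennreal (ww x)) \<partial>lborel)"
  proof (rule nn_integral_mono)
    fix x
    have "indicator E x \<le> ennreal (exp (t * A)) * (\<Prod>i<n. g i (dg ((gauss_map ^^ i) x)))"
    proof (cases "x \<in> E")
      case True
      define S where "S = (\<Sum>i<n. real (dg ((gauss_map ^^ i) x)))"
      have SA: "S < A" using True unfolding E_def S_def by simp
      have "(\<Prod>i<n. g i (dg ((gauss_map ^^ i) x))) = ennreal (\<Prod>i<n. exp (- t * real (dg ((gauss_map ^^ i) x))))"
        unfolding g_def by (rule prod_ennreal) simp
      also have "(\<Prod>i<n. exp (- t * real (dg ((gauss_map ^^ i) x)))) = exp (- t * S)"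
        unfolding S_def by (simp add: exp_sum[symmetric] sum_distrib_left)
      finally have p: "(\<Prod>i<n. g i (dg ((gauss_map ^^ i) x))) = ennreal (exp (- t * S))" .
      have "ennreal (exp (t * A)) * ennreal (exp (- t * S)) = ennreal (exp (t * (A - S)))"
        by (simp add: ennreal_mult[symmetric] exp_add[symmetric] algebra_simps)
      moreover have "1 \<le> exp (t * (A - S))" using SA t by simp
      ultimately have "1 \<le> ennreal (exp (t * A)) * ennreal (exp (- t * S))"
        by (metis ennreal_1 ennreal_leI)
      then show ?thesis using True p by simp
    qed simp
    then have "ennreal (ww x) * indicator E x \<le> ennreal (ww x) * (ennreal (exp (t * A)) * (\<Prod>i<n. g i (dg ((gauss_map ^^ i) x))))"
      by (rule mult_left_mono) simp
    then show "indicator {0<..<1} x * indicator E x * ennreal (ww x)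
      \<le> ennreal (exp (t * A)) * (indicator {0<..<1} x * (\<Prod>i<n. g i (dg ((gauss_map ^^ i) x))) * 1 * ennreal (ww x))"
      by (cases "x \<in> {0<..<1}") (auto simp: mult_ac)
  qed
  also have "\<dots> = ennreal (exp (t * A)) * (\<integral>\<^sup>+x. indicator {0<..<1} x * (\<Prod>i<n. g i (dg ((gauss_map ^^ i) x))) * 1 * ennreal (ww x) \<partial>lborel)"
    by (rule nn_integral_cmult) (simp add: ww_def)
  also have "(\<integral>\<^sup>+x. indicator {0<..<1} x * (\<Prod>i<n. g i (dg ((gauss_map ^^ i) x))) * 1 * ennreal (ww x) \<partial>lborel)
      \<le> (\<Prod>i<n. ennreal (1 - D)) * (\<integral>\<^sup>+y. indicator {0<..<1} y * 1 * ennreal (ww y) \<partial>lborel)"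
  proof -
    have "(\<integral>\<^sup>+x. indicator {0<..<1} x * (\<Prod>i<n. g i (dg ((gauss_map ^^ i) x))) * (\<lambda>_. 1) ((gauss_map ^^ n) x) * ennreal (ww x) \<partial>lborel)
      \<le> (\<Prod>i<n. ennreal (1 - D)) * (\<integral>\<^sup>+y. indicator {0<..<1} y * (\<lambda>_. 1) y * ennreal (ww y) \<partial>lborel)"
    proof (rule prod_lemma)
      fix i :: nat and y :: real assume y: "y \<in> {0<..<1}"
      show "(\<Sum>k. g i (Suc k) * ennreal (qq (Suc k) y)) \<le> ennreal (1 - D) * ennreal (ww y)"
        unfolding g_def
        by (rule hyp_real[where h="\<lambda>k. exp (- t * real k)"]) (use lower_hyp[OF t, of y] y in \<open>auto simp: D_def\<close>)
    qed simp
    then show ?thesis by simp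
  qed
  also have "\<dots> \<le> ennreal (1 - D) ^ n * 1"
    unfolding prod_constant card_lessThan by (rule mult_left_mono[OF ww_int]) simp
  also have "ennreal (1 - D) ^ n * 1 \<le> ennreal (exp (- (harm n / 18)))"
  proof -
    have "ennreal (1 - D) \<le> ennreal (exp (- D))" using exp_ge_add_one_self[of "-D"] by (intro ennreal_leI) simp
    then have "ennreal (1 - D) ^ n \<le> ennreal (exp (- D)) ^ n" by (rule power_mono) simp
    also have "\<dots> = ennreal (exp (- D) ^ n)" by (simp add: ennreal_power)
    also have "exp (- D) ^ n = exp (- (D * real n))" by (simp add: exp_of_nat_mult[symmetric] mult.commute)
    also have "ennreal (exp (- (D * real n))) \<le> ennreal (exp (- (harm n / 18)))"
    proof (intro ennreal_leI)
      have "t * harm n / 18 \<le> D" unfolding D_def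
        using lower_hyp(3)[OF t, of "1/2"] by simp
      then have "t * harm n / 18 * real n \<le> D * real n" by (rule mult_right_mono) simp
      moreover have "t * harm n / 18 * real n = harm n / 18" unfolding t_def using n by simp
      ultimately have "harm n / 18 \<le> D * real n" by linarith
      then show "exp (- (D * real n)) \<le> exp (- (harm n / 18))" by simp
    qed
    finally show ?thesis by simp
  qed
  finally have "emeasure lborel ({0<..<1} \<inter> E) \<le> 2 * (ennreal (exp (t * A)) * ennreal (exp (- (harm n / 18))))"
    by (simp add: mult_left_mono)
  also have "ennreal (exp (t * A)) * ennreal (exp (- (harm n / 18))) = ennreal (exp (t * A) * exp (- (harm n / 18)))"
    by (simp add: ennreal_mult)
  also have "exp (t * A) * exp (- (harm n / 18)) = exp (A / real n - harm n / 18)"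
    unfolding t_def by (simp add: exp_add[symmetric])
  also have "2 * ennreal (exp (A / real n - harm n / 18)) = ennreal (2 * exp (A / real n - harm n / 18))"
    using ennreal_mult[of 2 "exp (A / real n - harm n / 18)"] by simp
  finally show ?thesis unfolding E_def .
qed

definition fL :: "nat \<Rightarrow> nat \<Rightarrow> real" where
  "fL L k = (if prime k \<and> k \<le> L then real k else 0)"

definition Spr :: "nat \<Rightarrow> real" where
  "Spr L = (\<Sum>p\<in>{p. prime p \<and> p \<le> L}. 1 / real p)"

lemma expm1_le: fixes x :: real assumes "0 \<le> x" shows "exp x - 1 \<le> x * exp x"
proof -
  have "1 - x \<le> exp (-x)" using exp_ge_add_one_self[of "-x"] by simp
  then have "(1 - x) * exp x \<le> exp (-x) * exp x" by (rule mult_right_mono) simp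
  then show ?thesis by (simp add: exp_minus field_simps)
qed

lemma Spr_alt: "(\<Sum>k<L. (if prime (Suc k) then 1 / real (Suc k) else 0)) = Spr L"
proof -
  have "(\<Sum>k<L. (if prime (Suc k) then 1 / real (Suc k) else 0)) = (\<Sum>p\<in>{Suc 0..L}. (if prime p then 1 / real p else 0))"
    by (rule sum.atLeast1_atMost_eq[symmetric])
  also have "\<dots> = (\<Sum>p\<in>{p\<in>{Suc 0..L}. prime p}. 1 / real p)"
    by (rule sum.inter_filter[symmetric]) simp
  also have "{p\<in>{Suc 0..L}. prime p} = {p. prime p \<and> p \<le> L}"
    using prime_ge_1_nat by auto
  finally show ?thesis unfolding Spr_def .
qed

lemma upper_hyp:
  fixes \<tau> :: real and L :: nat
  assumes \<tau>: "0 < \<tau>" and y: "0 < y" "y < 1"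
  shows "summable (\<lambda>k. exp (\<tau> * fL L (Suc k)) * qq (Suc k) y)"
    and "(\<Sum>k. exp (\<tau> * fL L (Suc k)) * qq (Suc k) y) \<le> (1 + 2 * \<tau> * exp (\<tau> * real L) * Spr L) * ww y"
proof -
  define u where "u k = qq (Suc k) y" for k
  define r where "r k = (exp (\<tau> * fL L (Suc k)) - 1) * u k" for k
  have us: "u sums ww y" unfolding u_def using qq_sums y by simp
  have u0: "0 \<le> u k" for k unfolding u_def using qq_facts(1)[OF y, of "Suc k"] by simp
  have f0: "0 \<le> fL L k" for k unfolding fL_def by simp
  have fL': "fL L k \<le> real L" for k unfolding fL_def by simp
  have r0: "r k = 0" if "k \<notin> {..<L}" for k using that unfolding r_def fL_def by auto
  have rs: "r sums (\<Sum>k<L. r k)" by (rule sums_finite) (use r0 in auto)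
  have eq: "exp (\<tau> * fL L (Suc k)) * qq (Suc k) y = u k + r k" for k unfolding r_def u_def by (simp add: algebra_simps)
  have s2: "(\<lambda>k. u k + r k) sums (ww y + (\<Sum>k<L. r k))" using us rs by (rule sums_add)
  then show "summable (\<lambda>k. exp (\<tau> * fL L (Suc k)) * qq (Suc k) y)" unfolding eq by (simp add: sums_iff)
  have "(\<Sum>k<L. r k) \<le> (\<Sum>k<L. 2 * ww y * (\<tau> * exp (\<tau> * real L)) * (if prime (Suc k) then 1 / real (Suc k) else 0))"
  proof (rule sum_mono)
    fix k assume k: "k \<in> {..<L}"
    show "r k \<le> 2 * ww y * (\<tau> * exp (\<tau> * real L)) * (if prime (Suc k) then 1 / real (Suc k) else 0)"
    proof (cases "prime (Suc k)")
      case False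
      then show ?thesis unfolding r_def fL_def by simp
    next
      case True
      define a where "a = real (Suc k)"
      have a1: "a \<ge> 1" unfolding a_def by simp
      have fa: "fL L (Suc k) = a" unfolding fL_def a_def using True k by simp
      have "exp (\<tau> * a) - 1 \<le> \<tau> * a * exp (\<tau> * a)" using \<tau> a1 by (intro expm1_le) simp
      also have "\<dots> \<le> \<tau> * a * exp (\<tau> * real L)" using \<tau> a1 fL'[of "Suc k"] fa
        by (intro mult_left_mono) auto
      finally have e: "exp (\<tau> * a) - 1 \<le> \<tau> * a * exp (\<tau> * real L)" .
      have ub: "u k \<le> 2 * ww y / a ^ 2" unfolding u_def a_def using qq_facts(2)[OF y, of "Suc k"] by simp
      have "r k = (exp (\<tau> * a) - 1) * u k" unfolding r_def fa ..
      also have "\<dots> \<le> (\<tau> * a * exp (\<tau> * real L)) * (2 * ww y / a ^ 2)"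
        using e ub u0[of k] \<tau> a1 by (intro mult_mono) auto
      also have "\<dots> = 2 * ww y * (\<tau> * exp (\<tau> * real L)) * (1 / a)"
        using a1 by (simp add: power2_eq_square field_simps)
      finally show ?thesis using True unfolding a_def by simp
    qed
  qed
  also have "\<dots> = 2 * ww y * (\<tau> * exp (\<tau> * real L)) * Spr L"
    unfolding Spr_alt[symmetric] sum_distrib_left by simp
  finally have "(\<Sum>k<L. r k) \<le> 2 * ww y * (\<tau> * exp (\<tau> * real L)) * Spr L" .
  then show "(\<Sum>k. exp (\<tau> * fL L (Suc k)) * qq (Suc k) y) \<le> (1 + 2 * \<tau> * exp (\<tau> * real L) * Spr L) * ww y"
    using s2 unfolding eq by (simp add: sums_iff algebra_simps)
qed

lemma upper_tail:
  fixes A \<tau> :: real and L N :: nat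
  assumes \<tau>: "0 < \<tau>"
  shows "emeasure lborel ({0<..<1} \<inter> {x. A \<le> (\<Sum>i<N. fL L (dg ((gauss_map ^^ i) x)))})
    \<le> ennreal (2 * exp (- \<tau> * A + real N * (2 * \<tau> * exp (\<tau> * real L) * Spr L)))"
proof -
  define B where "B = 2 * \<tau> * exp (\<tau> * real L) * Spr L"
  have "0 \<le> Spr L" unfolding Spr_def by (rule sum_nonneg) simp
  then have B0: "0 \<le> B" unfolding B_def using \<tau> by simp
  define g where "g i k = ennreal (exp (\<tau> * fL L k))" for i k :: nat
  define E where "E = {x. A \<le> (\<Sum>i<N. fL L (dg ((gauss_map ^^ i) x)))}"
  have Em[measurable]: "E \<in> sets borel" unfolding E_def by measurable
  have "emeasure lborel ({0<..<1} \<inter> E) \<le> 2 * (\<integral>\<^sup>+x. indicator {0<..<1} x * indicator E x * ennreal (ww x) \<partial>lborel)"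
    by (rule event_bound[OF Em])
  also have "(\<integral>\<^sup>+x. indicator {0<..<1} x * indicator E x * ennreal (ww x) \<partial>lborel)
      \<le> (\<integral>\<^sup>+x. ennreal (exp (- \<tau> * A)) * (indicator {0<..<1} x * (\<Prod>i<N. g i (dg ((gauss_map ^^ i) x))) * 1 * ennreal (ww x)) \<partial>lborel)"
  proof (rule nn_integral_mono)
    fix x
    have "indicator E x \<le> ennreal (exp (- \<tau> * A)) * (\<Prod>i<N. g i (dg ((gauss_map ^^ i) x)))"
    proof (cases "x \<in> E")
      case True
      define S where "S = (\<Sum>i<N. fL L (dg ((gauss_map ^^ i) x)))"
      have SA: "A \<le> S" using True unfolding E_def S_def by simp
      have "(\<Prod>i<N. g i (dg ((gauss_map ^^ i) x))) = ennreal (\<Prod>i<N. exp (\<tau> * fL L (dg ((gauss_map ^^ i) x))))"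
        unfolding g_def by (rule prod_ennreal) simp
      also have "(\<Prod>i<N. exp (\<tau> * fL L (dg ((gauss_map ^^ i) x)))) = exp (\<tau> * S)"
        unfolding S_def by (simp add: exp_sum[symmetric] sum_distrib_left)
      finally have p: "(\<Prod>i<N. g i (dg ((gauss_map ^^ i) x))) = ennreal (exp (\<tau> * S))" .
      have "ennreal (exp (- \<tau> * A)) * ennreal (exp (\<tau> * S)) = ennreal (exp (\<tau> * (S - A)))"
        by (simp add: ennreal_mult[symmetric] exp_add[symmetric] algebra_simps)
      moreover have "1 \<le> exp (\<tau> * (S - A))" using SA \<tau> by simp
      ultimately have "1 \<le> ennreal (exp (- \<tau> * A)) * ennreal (exp (\<tau> * S))"
        by (metis ennreal_1 ennreal_leI)
      then show ?thesis using True p by simp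
    qed simp
    then have "ennreal (ww x) * indicator E x \<le> ennreal (ww x) * (ennreal (exp (- \<tau> * A)) * (\<Prod>i<N. g i (dg ((gauss_map ^^ i) x))))"
      by (rule mult_left_mono) simp
    then show "indicator {0<..<1} x * indicator E x * ennreal (ww x)
      \<le> ennreal (exp (- \<tau> * A)) * (indicator {0<..<1} x * (\<Prod>i<N. g i (dg ((gauss_map ^^ i) x))) * 1 * ennreal (ww x))"
      by (cases "x \<in> {0<..<1}") (auto simp: mult_ac)
  qed
  also have "\<dots> = ennreal (exp (- \<tau> * A)) * (\<integral>\<^sup>+x. indicator {0<..<1} x * (\<Prod>i<N. g i (dg ((gauss_map ^^ i) x))) * 1 * ennreal (ww x) \<partial>lborel)"
    by (rule nn_integral_cmult) (simp add: ww_def)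
  also have "(\<integral>\<^sup>+x. indicator {0<..<1} x * (\<Prod>i<N. g i (dg ((gauss_map ^^ i) x))) * 1 * ennreal (ww x) \<partial>lborel)
      \<le> (\<Prod>i<N. ennreal (1 + B)) * (\<integral>\<^sup>+y. indicator {0<..<1} y * 1 * ennreal (ww y) \<partial>lborel)"
  proof -
    have "(\<integral>\<^sup>+x. indicator {0<..<1} x * (\<Prod>i<N. g i (dg ((gauss_map ^^ i) x))) * (\<lambda>_. 1) ((gauss_map ^^ N) x) * ennreal (ww x) \<partial>lborel)
      \<le> (\<Prod>i<N. ennreal (1 + B)) * (\<integral>\<^sup>+y. indicator {0<..<1} y * (\<lambda>_. 1) y * ennreal (ww y) \<partial>lborel)"
    proof (rule prod_lemma)
      fix i :: nat and y :: real assume y: "y \<in> {0<..<1}"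
      show "(\<Sum>k. g i (Suc k) * ennreal (qq (Suc k) y)) \<le> ennreal (1 + B) * ennreal (ww y)"
        unfolding g_def
        by (rule hyp_real[where h="\<lambda>k. exp (\<tau> * fL L k)"]) (use upper_hyp[OF \<tau>, of y L] y in \<open>auto simp: B_def\<close>)
    qed simp
    then show ?thesis by simp
  qed
  also have "\<dots> \<le> ennreal (1 + B) ^ N * 1"
    unfolding prod_constant card_lessThan by (rule mult_left_mono[OF ww_int]) simp
  also have "ennreal (1 + B) ^ N * 1 \<le> ennreal (exp (real N * B))"
  proof -
    have "ennreal (1 + B) \<le> ennreal (exp B)" using exp_ge_add_one_self[of B] by (intro ennreal_leI) simp
    then have "ennreal (1 + B) ^ N \<le> ennreal (exp B) ^ N" by (rule power_mono) simp
    also have "\<dots> = ennreal (exp B ^ N)" by (simp add: ennreal_power)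
    also have "exp B ^ N = exp (real N * B)" by (simp add: exp_of_nat_mult[symmetric])
    finally show ?thesis by simp
  qed
  finally have "emeasure lborel ({0<..<1} \<inter> E) \<le> 2 * (ennreal (exp (- \<tau> * A)) * ennreal (exp (real N * B)))"
    by (simp add: mult_left_mono)
  also have "ennreal (exp (- \<tau> * A)) * ennreal (exp (real N * B)) = ennreal (exp (- \<tau> * A) * exp (real N * B))"
    by (simp add: ennreal_mult)
  also have "exp (- \<tau> * A) * exp (real N * B) = exp (- \<tau> * A + real N * B)"
    by (simp add: exp_add[symmetric])
  also have "2 * ennreal (exp (- \<tau> * A + real N * B)) = ennreal (2 * exp (- \<tau> * A + real N * B))"
    using ennreal_mult[of 2 "exp (- \<tau> * A + real N * B)"] by simp
  finally show ?thesis unfolding E_def B_def .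
qed

lemma recip_sq_primes_series:
  fixes N :: nat assumes N: "N \<ge> 2"
  defines "h \<equiv> (\<lambda>k::nat. if prime k \<and> N < k then 1 else 0 :: real)"
  shows "summable (\<lambda>k. h (Suc k) / real (Suc k) ^ 2)"
    and "(\<Sum>k. h (Suc k) / real (Suc k) ^ 2) \<le> 4 * ln 2 / (real N * ln (real N))"
proof -
  have b: "h (Suc k) / real (Suc k) ^ 2 \<le> 2 * qq (Suc k) 0" for k
  proof -
    have "h (Suc k) / real (Suc k) ^ 2 \<le> 1 / real (Suc k) ^ 2" unfolding h_def by (simp add: divide_right_mono)
    also have "\<dots> \<le> 2 * qq (Suc k) 0"
    proof -
      define a where "a = real (Suc k)"
      have a1: "a \<ge> 1" unfolding a_def by simp
      have "1 / a^2 = 2 / (2 * a^2)" by simp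
      also have "\<dots> \<le> 2 / (a * (a + 1))"
      proof (rule divide_left_mono)
        show "a * (a + 1) \<le> 2 * a^2" using a1 by (simp add: power2_eq_square algebra_simps)
        have "0 < 2 * a^2" "0 < a * (a + 1)" using a1 by auto
        then show "0 < 2 * a^2 * (a * (a + 1))" by (rule mult_pos_pos)
      qed simp
      also have "\<dots> = 2 * qq (Suc k) 0" unfolding qq_def a_def by simp
      finally show ?thesis unfolding a_def .
    qed
    finally show ?thesis .
  qed
  have h0: "0 \<le> h k" for k unfolding h_def by simp
  show sm: "summable (\<lambda>k. h (Suc k) / real (Suc k) ^ 2)"
  proof (rule summable_comparison_test')
    show "summable (\<lambda>k. 2 * qq (Suc k) 0)" using qq_sums[of 0] by (intro summable_mult) (auto simp: sums_iff)
    fix k show "norm (h (Suc k) / real (Suc k) ^ 2) \<le> 2 * qq (Suc k) 0" using b[of k] h0[of "Suc k"] by simp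
  qed
  show "(\<Sum>k. h (Suc k) / real (Suc k) ^ 2) \<le> 4 * ln 2 / (real N * ln (real N))"
  proof (rule suminf_le_const[OF sm])
    fix B :: nat
    have "(\<Sum>k<B. h (Suc k) / real (Suc k) ^ 2) = (\<Sum>p\<in>{Suc 0..B}. h p / real p ^ 2)"
      by (rule sum.atLeast1_atMost_eq[symmetric])
    also have "\<dots> = (\<Sum>p\<in>{p\<in>{Suc 0..B}. prime p \<and> N < p}. 1 / real p ^ 2)"
      unfolding h_def by (subst sum.inter_filter) (auto intro!: sum.cong)
    also have "\<dots> \<le> (\<Sum>p\<in>{p. prime p \<and> N < p \<and> p \<le> N * 2^B}. 1 / real p ^ 2)"
    proof (rule sum_mono2)
      show "finite {p. prime p \<and> N < p \<and> p \<le> N * 2^B}" by (rule finite_subset[of _ "{..N*2^B}"]) auto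
      have "B < 2^B" by (rule less_exp)
      moreover have "2^B \<le> N * 2^B" using N by simp
      ultimately have "B \<le> N * 2^B" by linarith
      then show "{p\<in>{Suc 0..B}. prime p \<and> N < p} \<subseteq> {p. prime p \<and> N < p \<and> p \<le> N * 2^B}" by auto
    qed simp
    also have "\<dots> \<le> 4 * ln 2 / (real N * ln (real N)) * (1 - (1/2)^B)" by (rule recip_sq_primes[OF N])
    also have "\<dots> \<le> 4 * ln 2 / (real N * ln (real N))"
      using N by (intro mult_left_le) (auto intro!: divide_nonneg_nonneg mult_nonneg_nonneg)
    finally show "(\<Sum>k<B. h (Suc k) / real (Suc k) ^ 2) \<le> 4 * ln 2 / (real N * ln (real N))" .
  qed
qed

lemma tail_prime:
  fixes NT i :: nat assumes NT: "NT \<ge> 2"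
  shows "emeasure lborel ({0<..<1} \<inter> {x. prime (dg ((gauss_map ^^ i) x)) \<and> NT < dg ((gauss_map ^^ i) x)})
    \<le> ennreal (2 * (8 * ln 2 / (real NT * ln (real NT))))"
proof -
  define C where "C = 8 * ln 2 / (real NT * ln (real NT))"
  have C0: "0 \<le> C" unfolding C_def using NT by (auto intro!: divide_nonneg_nonneg mult_nonneg_nonneg)
  define h where "h = (\<lambda>k::nat. if prime k \<and> NT < k then 1 else 0 :: real)"
  define g where "g l k = (if l = i then ennreal (h k) else 1)" for l k :: nat
  define c where "c l = (if l = i then ennreal C else 1)" for l :: nat
  define E where "E = {x. prime (dg ((gauss_map ^^ i) x)) \<and> NT < dg ((gauss_map ^^ i) x)}"
  have Em[measurable]: "E \<in> sets borel" unfolding E_def by measurable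
  have ind: "indicator E x = (\<Prod>l<Suc i. g l (dg ((gauss_map ^^ l) x)))" for x
  proof -
    have "(\<Prod>l<Suc i. g l (dg ((gauss_map ^^ l) x))) = (\<Prod>l<i. g l (dg ((gauss_map ^^ l) x))) * g i (dg ((gauss_map ^^ i) x))"
      by simp
    also have "(\<Prod>l<i. g l (dg ((gauss_map ^^ l) x))) = 1" unfolding g_def by (intro prod.neutral) auto
    finally show ?thesis unfolding g_def h_def E_def by (simp add: indicator_def)
  qed
  have "emeasure lborel ({0<..<1} \<inter> E) \<le> 2 * (\<integral>\<^sup>+x. indicator {0<..<1} x * indicator E x * ennreal (ww x) \<partial>lborel)"
    by (rule event_bound[OF Em])
  also have "(\<integral>\<^sup>+x. indicator {0<..<1} x * indicator E x * ennreal (ww x) \<partial>lborel)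
     = (\<integral>\<^sup>+x. indicator {0<..<1} x * (\<Prod>l<Suc i. g l (dg ((gauss_map ^^ l) x))) * (\<lambda>_. 1) ((gauss_map ^^ Suc i) x) * ennreal (ww x) \<partial>lborel)"
    unfolding ind by simp
  also have "\<dots> \<le> (\<Prod>l<Suc i. c l) * (\<integral>\<^sup>+y. indicator {0<..<1} y * (\<lambda>_. 1) y * ennreal (ww y) \<partial>lborel)"
  proof (rule prod_lemma)
    fix l :: nat and y :: real assume y: "y \<in> {0<..<1}"
    then have y': "0 < y" "y < 1" by auto
    show "(\<Sum>k. g l (Suc k) * ennreal (qq (Suc k) y)) \<le> c l * ennreal (ww y)"
    proof (cases "l = i")
      case False
      have "(\<Sum>k. ennreal 1 * ennreal (qq (Suc k) y)) \<le> ennreal 1 * ennreal (ww y)"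
        by (rule hyp_real[where h="\<lambda>_. 1"]) (use qq_sums[of y] y' in \<open>auto simp: sums_iff\<close>)
      then show ?thesis using False unfolding g_def c_def by simp
    next
      case True
      have "(\<Sum>k. ennreal (h (Suc k)) * ennreal (qq (Suc k) y)) \<le> ennreal C * ennreal (ww y)"
      proof (rule hyp_real[OF _ y'])
        show "0 \<le> h k" for k unfolding h_def by simp
        show sm: "summable (\<lambda>k. h (Suc k) * qq (Suc k) y)"
          by (rule summable_bdd_qq[where B=1]) (use y' in \<open>auto simp: h_def\<close>)
        have le: "h (Suc k) * qq (Suc k) y \<le> 2 * ww y * (h (Suc k) / real (Suc k) ^ 2)" for k
        proof -
          have "h (Suc k) * qq (Suc k) y \<le> h (Suc k) * (2 * ww y / real (Suc k) ^ 2)"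
            using qq_facts(2)[OF y', of "Suc k"] by (intro mult_left_mono) (auto simp: h_def)
          then show ?thesis by (simp add: field_simps)
        qed
        have smh: "summable (\<lambda>k. h (Suc k) / real (Suc k) ^ 2)"
          using recip_sq_primes_series(1)[OF NT] unfolding h_def .
        have "(\<Sum>k. h (Suc k) * qq (Suc k) y) \<le> (\<Sum>k. 2 * ww y * (h (Suc k) / real (Suc k) ^ 2))"
          by (intro suminf_le[OF le sm] summable_mult[OF smh])
        also have "\<dots> = 2 * ww y * (\<Sum>k. h (Suc k) / real (Suc k) ^ 2)"
          using smh by (rule suminf_mult)
        also have "\<dots> \<le> 2 * ww y * (4 * ln 2 / (real NT * ln (real NT)))"
          using recip_sq_primes_series(2)[OF NT] ww_bounds[OF y'] unfolding h_def
          by (intro mult_left_mono) auto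
        also have "\<dots> = C * ww y" unfolding C_def by simp
        finally show "(\<Sum>k. h (Suc k) * qq (Suc k) y) \<le> C * ww y" .
      qed
      then show ?thesis using True unfolding g_def c_def by simp
    qed
  qed simp
  also have "\<dots> \<le> ennreal C * 1"
  proof -
    have "(\<Prod>l<Suc i. c l) = ennreal C"
    proof -
      have "(\<Prod>l<Suc i. c l) = (\<Prod>l<i. c l) * c i" by simp
      also have "(\<Prod>l<i. c l) = 1" unfolding c_def by (intro prod.neutral) auto
      finally show ?thesis unfolding c_def by simp
    qed
    moreover have "ennreal C * (\<integral>\<^sup>+y. indicator {0<..<1} y * 1 * ennreal (ww y) \<partial>lborel) \<le> ennreal C * 1"
      by (rule mult_left_mono[OF ww_int]) simp
    ultimately show ?thesis by simp
  qed
  finally have "emeasure lborel ({0<..<1} \<inter> E) \<le> 2 * ennreal C" by (simp add: mult_left_mono)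
  also have "2 * ennreal C = ennreal (2 * C)" using ennreal_mult[of 2 C] C0 by simp
  finally show ?thesis unfolding E_def C_def .
qed




lemma harm_le_ln: "m \<ge> 1 \<Longrightarrow> harm m \<le> 1 + ln (real m)"
  using euler_mascheroni_sequence_decreasing[of 1 m] by (simp add: harm_def)

lemma Spr_bound:
  assumes "L \<le> 2 ^ Suc m" "m \<ge> 1"
  shows "Spr L \<le> 5/2 + 2 * ln (real m)"
proof -
  have "Spr L \<le> (\<Sum>p\<in>{p. prime p \<and> p \<le> 2^Suc m}. 1 / real p)"
    unfolding Spr_def
    by (rule sum_mono2) (use assms(1) in \<open>auto intro: finite_subset[of _ "{..2^Suc m}"]\<close>)
  also have "\<dots> \<le> 1/2 + 2 * harm m" by (rule recip_primes_pow2)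
  also have "\<dots> \<le> 5/2 + 2 * ln (real m)" using harm_le_ln[OF assms(2)] by simp
  finally show ?thesis .
qed

definition Lj :: "nat \<Rightarrow> nat \<Rightarrow> nat" where "Lj s j = 2^(j-9-s) * j"
definition Alo :: "nat \<Rightarrow> real" where "Alo j = 2^j * real j / 64"
definition Aup :: "nat \<Rightarrow> nat \<Rightarrow> real" where "Aup s j = 8 * real (Lj s j)"

lemma Aup_eq: assumes "j \<ge> 9 + s" shows "Aup s j = Alo j / 2^s"
proof -
  have "(2::real)^j = 2^(j-9-s) * 2^(9+s)" using assms by (simp add: power_add[symmetric])
  then show ?thesis unfolding Aup_def Alo_def Lj_def by (simp add: power_add field_simps)
qed

definition E1 :: "nat \<Rightarrow> real set" where
  "E1 j = {0<..<1} \<inter> {x. (\<Sum>i<2^j. real (dg ((gauss_map ^^ i) x))) < Alo j}"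
definition E2 :: "nat \<Rightarrow> nat \<Rightarrow> real set" where
  "E2 s j = {0<..<1} \<inter> {x. Aup s j \<le> (\<Sum>i<2^Suc j. fL (Lj s j) (dg ((gauss_map ^^ i) x)))}"
definition E3 :: "nat \<Rightarrow> nat \<Rightarrow> real set" where
  "E3 s j = (\<Union>i<2^Suc j. {0<..<1} \<inter> {x. prime (dg ((gauss_map ^^ i) x)) \<and> Lj s j < dg ((gauss_map ^^ i) x)})"

lemma E_meas[measurable]: "E1 j \<in> sets borel" "E2 s j \<in> sets borel" "E3 s j \<in> sets borel"
  unfolding E1_def E2_def E3_def by measurable

lemma E1_bound: assumes "j \<ge> 1" shows "emeasure lborel (E1 j) \<le> ennreal (2 * exp (- real j / 50))"
proof -
  have "emeasure lborel (E1 j) \<le> ennreal (2 * exp (Alo j / real (2^j) - harm (2^j) / 18))"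
    unfolding E1_def by (rule lower_tail) simp
  also have "\<dots> \<le> ennreal (2 * exp (- real j / 50))"
  proof (intro ennreal_leI mult_left_mono) 
    have "ln (real (2^j) + 1) \<le> harm (2^j)" by (rule ln_le_harm)
    moreover have "ln (real (2^j)) \<le> ln (real (2^j) + 1)" 
    proof -
      have p1: "0 < real ((2::nat)^j)" by simp
      have p2: "0 < real ((2::nat)^j) + 1" using p1 by linarith
      show ?thesis using ln_le_cancel_iff[OF p1 p2] by simp
    qed
    moreover have "ln (real (2^j)) = real j * ln 2" by (simp add: ln_realpow)
    moreover have "real j * (2/3) \<le> real j * ln 2" using ln2_ge_two_thirds by (intro mult_left_mono) auto
    ultimately have h: "real j * (2/3) \<le> harm (2^j)" by linarith
    have "Alo j / real (2^j) = real j / 64" unfolding Alo_def by simp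
    then show "exp (Alo j / real (2^j) - harm (2^j) / 18) \<le> exp (- real j / 50)" using h by simp
  qed simp
  finally show ?thesis .
qed

definition b2 :: "nat \<Rightarrow> nat \<Rightarrow> real" where
  "b2 s j = 2 * exp (- 2 * ln (real j) + 2^(11+s) * (ln (real j) * exp (ln (real j) / 4) * (5/2 + 2 * ln (2 * real j)) / real j) / 4)"

lemma E2_bound: assumes j: "j \<ge> 20 + 2 * s" shows "emeasure lborel (E2 s j) \<le> ennreal (b2 s j)"
proof -
  define L where "L = Lj s j"
  define K where "K = ln (real j) / 4"
  define \<tau> where "\<tau> = K / real L"
  have j2: "real j \<ge> 2" using j by simp
  have Kp: "K > 0" unfolding K_def using j2 by simp
  have L1: "real L \<ge> 1"
  proof -
    have "1 \<le> (2::nat)^(j-9-s)" by simp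
    moreover have "1 \<le> j" using j by simp
    ultimately have "1 * 1 \<le> 2^(j-9-s) * j" by (intro mult_le_mono)
    then show ?thesis unfolding L_def Lj_def by linarith
  qed
  have L0: "real L > 0" using L1 by simp
  have \<tau>: "0 < \<tau>" unfolding \<tau>_def using Kp L0 by simp
  have "emeasure lborel (E2 s j) \<le> ennreal (2 * exp (- \<tau> * Aup s j + real (2^Suc j) * (2 * \<tau> * exp (\<tau> * real L) * Spr L)))"
    unfolding E2_def L_def by (rule upper_tail[OF \<tau>[unfolded L_def]])
  also have "\<dots> \<le> ennreal (b2 s j)"
    unfolding b2_def
  proof (intro ennreal_leI mult_left_mono)
    have e1: "- \<tau> * Aup s j = - 2 * ln (real j)"
      unfolding \<tau>_def Aup_def L_def[symmetric] K_def using L0 by simp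
    have tL: "\<tau> * real L = K" unfolding \<tau>_def using L0 by simp
    have pw: "real (2^Suc j) * 2 / real L = 2^(11+s) / real j"
    proof -
      have ex: "j - 9 - s + (11 + s) = Suc (Suc j)" using j by simp
      have "(2::real)^(j-9-s) * 2^(11+s) = 2^(Suc (Suc j))" by (simp only: power_add[symmetric] ex)
      then have "(2::real)^Suc j * 2 = 2^(j-9-s) * 2^(11+s)" by simp
      then show ?thesis unfolding L_def Lj_def using j2 by (simp add: field_simps)
    qed
    have LL: "L \<le> 2 ^ Suc (2 * j - 1)"
    proof -
      have "2^(j-9-s) \<le> (2::nat)^j" by (rule power_increasing) auto
      moreover have "j \<le> (2::nat)^j" using less_exp[of j] by simp
      ultimately have "L \<le> 2^j * 2^j" unfolding L_def Lj_def by (intro mult_le_mono)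
      also have "\<dots> = 2 ^ (j + j)" by (simp only: power_add)
      also have "j + j = Suc (2 * j - 1)" using j by simp
      finally show ?thesis by simp
    qed
    have "Spr L \<le> 5/2 + 2 * ln (real (2 * j - 1))" by (rule Spr_bound[OF LL]) (use j in simp)
    also have "ln (real (2 * j - 1)) \<le> ln (2 * real j)" using j by (subst ln_le_cancel_iff) auto
    finally have sp: "Spr L \<le> 5/2 + 2 * ln (2 * real j)" by simp
    have "real (2^Suc j) * (2 * \<tau> * exp (\<tau> * real L) * Spr L) = (real (2^Suc j) * 2 / real L) * K * exp K * Spr L"
      unfolding tL unfolding \<tau>_def by (simp add: field_simps)
    also have "\<dots> = 2^(11+s) / real j * K * exp K * Spr L" unfolding pw ..
    also have "\<dots> \<le> 2^(11+s) / real j * K * exp K * (5/2 + 2 * ln (2 * real j))"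
      using sp Kp j2 by (intro mult_left_mono) auto
    also have "\<dots> = 2^(11+s) * (ln (real j) * exp (ln (real j) / 4) * (5/2 + 2 * ln (2 * real j)) / real j) / 4"
      unfolding K_def by (simp add: field_simps)
    finally show "exp (- \<tau> * Aup s j + real (2^Suc j) * (2 * \<tau> * exp (\<tau> * real L) * Spr L))
      \<le> exp (- 2 * ln (real j) + 2^(11+s) * (ln (real j) * exp (ln (real j) / 4) * (5/2 + 2 * ln (2 * real j)) / real j) / 4)"
      unfolding e1 by simp
  qed simp
  finally show ?thesis .
qed


lemma E3_bound: assumes j: "j \<ge> 20 + 2 * s" shows "emeasure lborel (E3 s j) \<le> ennreal (2^(15+s) / real j ^ 2)"
proof -
  define L where "L = Lj s j"
  define N where "N = (2::nat)^Suc j"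
  have j2: "real j \<ge> 2" using j by simp
  have L2: "L \<ge> 2"
  proof -
    have "2 \<le> (2::nat)^(j-9-s)" using j by (simp add: self_le_power)
    moreover have "1 \<le> j" using j by simp
    ultimately have "2 * 1 \<le> 2^(j-9-s) * j" by (intro mult_le_mono)
    then show ?thesis unfolding L_def Lj_def by linarith
  qed
  define C where "C = 2 * (8 * ln 2 / (real L * ln (real L)))"
  have C0: "0 \<le> C" unfolding C_def using L2 by (auto intro!: divide_nonneg_nonneg mult_nonneg_nonneg)
  have "emeasure lborel (E3 s j) \<le> (\<Sum>i<N. emeasure lborel ({0<..<1} \<inter> {x. prime (dg ((gauss_map ^^ i) x)) \<and> L < dg ((gauss_map ^^ i) x)}))"
    unfolding E3_def L_def[symmetric] N_def[symmetric] by (rule emeasure_subadditive_finite) auto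
  also have "\<dots> \<le> (\<Sum>i<N. ennreal C)"
    unfolding C_def by (rule sum_mono) (rule tail_prime[OF L2])
  also have "\<dots> = ennreal (real N * C)" using C0 by (simp add: ennreal_mult ennreal_of_nat_eq_real_of_nat)
  also have "\<dots> \<le> ennreal (2^(15+s) / real j ^ 2)"
  proof (rule ennreal_leI)
    have lnL: "real j / 2 * ln 2 \<le> ln (real L)"
    proof -
      have "real j / 2 \<le> real (j - 9 - s)" using j by simp
      then have "real j / 2 * ln 2 \<le> real (j - 9 - s) * ln 2" by (rule mult_right_mono) simp
      also have "\<dots> = ln (2 ^ (j - 9 - s))" by (simp add: ln_realpow)
      also have "\<dots> \<le> ln (real L)"
      proof -
        have "(2::real) ^ (j - 9 - s) \<le> 2^(j-9-s) * real j" using j2 by simp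
        then show ?thesis unfolding L_def Lj_def by (subst ln_le_cancel_iff) auto
      qed
      finally show ?thesis .
    qed
    have pos: "0 < real j / 2 * ln 2" using j2 by simp
    have NL: "real N / real L = 2^(10+s) / real j"
    proof -
      have ex: "j - 9 - s + (10 + s) = Suc j" using j by simp
      have "(2::real)^(j-9-s) * 2^(10+s) = 2^(Suc j)" by (simp only: power_add[symmetric] ex)
      then show ?thesis unfolding N_def L_def Lj_def using j2 by (simp add: field_simps)
    qed
    have "real N * C = (real N / real L) * 16 * ln 2 / ln (real L)"
      unfolding C_def using L2 by (simp add: field_simps)
    also have "\<dots> = 2^(10+s) / real j * 16 * ln 2 / ln (real L)" unfolding NL ..
    also have "\<dots> \<le> 2^(10+s) / real j * 16 * ln 2 / (real j / 2 * ln 2)"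
      using lnL pos j2 order.strict_trans2[OF pos lnL] by (intro divide_left_mono) (auto intro!: mult_pos_pos)
    also have "\<dots> = 2^(15+s) / real j ^ 2"
      using j2 by (simp add: power_add power2_eq_square field_simps)
    finally show "real N * C \<le> 2^(15+s) / real j ^ 2" .
  qed
  finally show ?thesis .
qed


definition AA :: "nat \<Rightarrow> nat \<Rightarrow> real set" where
  "AA s j = (if j \<ge> 20 + 2 * s then E1 j \<union> E2 s j \<union> E3 s j else {})"

lemma AA_meas[measurable]: "AA s j \<in> sets lborel"
  unfolding AA_def by simp

lemma AA_sub: "AA s j \<subseteq> {0<..<1}"
  unfolding AA_def E1_def E2_def E3_def by auto

lemma AA_fin: "emeasure lborel (AA s j) < \<infinity>"
proof -
  have "emeasure lborel (AA s j) \<le> emeasure lborel {0<..<1::real}"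
    by (rule emeasure_mono[OF AA_sub]) simp
  then show ?thesis by (simp add: le_less_trans)
qed

lemma b2_eventually: "eventually (\<lambda>j. b2 s j \<le> 2 * exp 1 / real j ^ 2) sequentially"
proof -
  have "(\<lambda>j::nat. ln (real j) * exp (ln (real j) / 4) * (5/2 + 2 * ln (2 * real j)) / real j) \<longlonglongrightarrow> 0"
    by real_asymp
  then have "(\<lambda>j::nat. 2^(11+s) * (ln (real j) * exp (ln (real j) / 4) * (5/2 + 2 * ln (2 * real j)) / real j) / 4) \<longlonglongrightarrow> 2^(11+s) * 0 / 4"
    by (intro tendsto_intros) auto
  then have "eventually (\<lambda>j. 2^(11+s) * (ln (real j) * exp (ln (real j) / 4) * (5/2 + 2 * ln (2 * real j)) / real j) / 4 < 1) sequentially"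
    by (intro order_tendstoD) auto
  moreover have "eventually (\<lambda>j::nat. j \<ge> 1) sequentially" by (rule eventually_ge_at_top)
  ultimately show ?thesis
  proof eventually_elim
    case (elim j)
    then have "b2 s j \<le> 2 * exp (- 2 * ln (real j) + 1)" unfolding b2_def by simp
    also have "exp (- 2 * ln (real j) + 1) = exp 1 / real j ^ 2"
    proof -
      have "2 * ln (real j) = ln (real j ^ 2)" using elim by (simp add: ln_realpow)
      then have "exp (- 2 * ln (real j)) = inverse (real j ^ 2)" using elim by (simp add: exp_minus)
      moreover have "exp (- 2 * ln (real j) + 1) = exp (- 2 * ln (real j)) * exp 1" by (rule exp_add)
      ultimately show ?thesis by (simp add: divide_inverse mult.commute)
    qed
    finally show ?case by simp
  qed
qed

lemma AA_bound: "measure lborel (AA s j) \<le> (if j \<ge> 20 + 2 * s then 2 * exp (- real j / 50) + b2 s j + 2^(15+s) / real j ^ 2 else 0)"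
proof (cases "j \<ge> 20 + 2 * s")
  case True
  have b20: "0 \<le> b2 s j" unfolding b2_def by simp
  have "emeasure lborel (AA s j) \<le> emeasure lborel (E1 j \<union> E2 s j) + emeasure lborel (E3 s j)"
    unfolding AA_def using True by (simp add: emeasure_subadditive)
  also have "\<dots> \<le> (emeasure lborel (E1 j) + emeasure lborel (E2 s j)) + emeasure lborel (E3 s j)"
    by (intro add_right_mono emeasure_subadditive) auto
  also have "\<dots> \<le> (ennreal (2 * exp (- real j / 50)) + ennreal (b2 s j)) + ennreal (2^(15+s) / real j ^ 2)"
    using True by (intro add_mono E1_bound E2_bound E3_bound) auto
  also have "\<dots> = ennreal (2 * exp (- real j / 50) + b2 s j + 2^(15+s) / real j ^ 2)"
    using b20 by (simp add: ennreal_plus)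
  finally have "measure lborel (AA s j) \<le> 2 * exp (- real j / 50) + b2 s j + 2^(15+s) / real j ^ 2"
    unfolding measure_def using b20 by (intro enn2real_leI) auto
  then show ?thesis using True by simp
qed (simp add: AA_def)

lemma AA_summable: "summable (\<lambda>j. measure lborel (AA s j))"
proof -
  obtain N where N: "\<And>j. j \<ge> N \<Longrightarrow> b2 s j \<le> 2 * exp 1 / real j ^ 2"
    using b2_eventually[of s] unfolding eventually_sequentially by blast
  show ?thesis
proof (rule summable_comparison_test'[where N=N])
  show "summable (\<lambda>j. 2 * exp (-1/50) ^ j + (2 * exp 1 + 2^(15+s)) * inverse (real j ^ 2))"
  proof (intro summable_add summable_mult summable_geometric)
    show "norm (exp (-1/50::real)) < 1" by simp
    show "summable (\<lambda>j. inverse (real j ^ 2))" by (rule inverse_power_summable) simp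
  qed
  fix j assume j: "j \<ge> N"
  have "norm (measure lborel (AA s j)) = measure lborel (AA s j)" by simp
  also have "\<dots> \<le> (if j \<ge> 20 + 2 * s then 2 * exp (- real j / 50) + b2 s j + 2^(15+s) / real j ^ 2 else 0)"
    by (rule AA_bound)
  also have "\<dots> \<le> 2 * exp (-1/50) ^ j + (2 * exp 1 + 2^(15+s)) * inverse (real j ^ 2)"
  proof (cases "j \<ge> 20 + 2 * s")
    case True
    have "exp (- real j / 50) = exp (-1/50) ^ j" by (simp add: exp_of_nat_mult[symmetric])
    moreover have "b2 s j + 2^(15+s) / real j ^ 2 \<le> (2 * exp 1 + 2^(15+s)) * inverse (real j ^ 2)"
    proof -
      have "(2 * exp 1 + 2^(15+s)) * inverse (real j ^ 2) = 2 * exp 1 / real j ^ 2 + 2^(15+s) / real j ^ 2"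
        by (simp add: distrib_right divide_inverse)
      then show ?thesis using N[OF j] by linarith
    qed
    ultimately show ?thesis using True by simp
  qed simp
  finally show "norm (measure lborel (AA s j)) \<le> 2 * exp (-1/50) ^ j + (2 * exp 1 + 2^(15+s)) * inverse (real j ^ 2)" .
qed
qed


lemma determ:
  fixes x :: real and s J m :: nat
  assumes x: "x \<in> {0<..<1}" and J: "J \<ge> 20 + 2 * s" and nA: "\<And>j. j \<ge> J \<Longrightarrow> x \<notin> AA s j"
    and m: "m \<ge> 2^J"
  shows "(\<Sum>i<m. (if prime (dg ((gauss_map ^^ i) x)) then real (dg ((gauss_map ^^ i) x)) else 0))
           \<le> (\<Sum>i<m. real (dg ((gauss_map ^^ i) x))) / 2^s"
    and "0 < (\<Sum>i<m. real (dg ((gauss_map ^^ i) x)))"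
proof -
  define d where "d i = dg ((gauss_map ^^ i) x)" for i
  have m1: "m \<ge> 1" using m by (metis one_le_numeral one_le_power order_trans)
  obtain j where j: "2^j \<le> m" "m < 2^(j+1)" using ex_power_ivl1[of 2 m] m1 by auto
  have Jj: "J \<le> j"
  proof (rule ccontr)
    assume "\<not> J \<le> j"
    then have "j + 1 \<le> J" by simp
    then have "(2::nat)^(j+1) \<le> 2^J" by (rule power_increasing) simp
    then show False using j m by simp
  qed
  have jJ: "j \<ge> 20 + 2 * s" using Jj J by simp
  have nx: "x \<notin> E1 j" "x \<notin> E2 s j" "x \<notin> E3 s j" using nA[OF Jj] jJ unfolding AA_def by auto
  have S1: "Alo j \<le> (\<Sum>i<2^j. real (d i))" using nx(1) x unfolding E1_def d_def by auto
  have Smono: "(\<Sum>i<2^j. real (d i)) \<le> (\<Sum>i<m. real (d i))"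
    using j(1) by (intro sum_mono2) auto
  have Alo0: "0 < Alo j" unfolding Alo_def using jJ by simp
  show "0 < (\<Sum>i<m. real (dg ((gauss_map ^^ i) x)))" using S1 Smono Alo0 unfolding d_def by linarith
  have E3': "\<not> (prime (d i) \<and> Lj s j < d i)" if "i < 2^Suc j" for i
    using nx(3) x that unfolding E3_def d_def by auto
  have eqf: "(if prime (d i) then real (d i) else 0) = fL (Lj s j) (d i)" if "i < 2^Suc j" for i
    using E3'[OF that] unfolding fL_def by auto
  have "(\<Sum>i<m. (if prime (d i) then real (d i) else 0)) \<le> (\<Sum>i<2^Suc j. (if prime (d i) then real (d i) else 0))"
    using j(2) by (intro sum_mono2) auto
  also have "\<dots> = (\<Sum>i<2^Suc j. fL (Lj s j) (d i))" using eqf by (intro sum.cong) auto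
  also have "\<dots> < Aup s j" using nx(2) x unfolding E2_def d_def by auto
  also have "\<dots> = Alo j / 2^s" using jJ by (intro Aup_eq) simp
  also have "\<dots> \<le> (\<Sum>i<m. real (d i)) / 2^s" using S1 Smono by (intro divide_right_mono) auto
  finally show "(\<Sum>i<m. (if prime (dg ((gauss_map ^^ i) x)) then real (dg ((gauss_map ^^ i) x)) else 0))
           \<le> (\<Sum>i<m. real (dg ((gauss_map ^^ i) x))) / 2^s" unfolding d_def by simp
qed


lemma AE_s:
  "AE x in lborel. x \<in> {0<..<1} \<longrightarrow> (\<exists>M. \<forall>m\<ge>M.
      (\<Sum>i<m. (if prime (dg ((gauss_map ^^ i) x)) then real (dg ((gauss_map ^^ i) x)) else 0))
           \<le> (\<Sum>i<m. real (dg ((gauss_map ^^ i) x))) / 2^s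
      \<and> 0 < (\<Sum>i<m. real (dg ((gauss_map ^^ i) x))))"
proof -
  have "AE x in lborel. eventually (\<lambda>j. x \<in> space lborel - AA s j) sequentially"
    by (rule borel_cantelli_AE1[OF AA_meas AA_fin AA_summable])
  then show ?thesis
  proof eventually_elim
    case (elim x)
    show ?case
    proof
      assume x: "x \<in> {0<..<1}"
      obtain J0 where J0: "\<And>j. j \<ge> J0 \<Longrightarrow> x \<notin> AA s j"
        using elim unfolding eventually_sequentially by auto
      define J where "J = max J0 (20 + 2 * s)"
      have nA: "x \<notin> AA s j" if "j \<ge> J" for j using J0 that unfolding J_def by auto
      have J20: "J \<ge> 20 + 2 * s" unfolding J_def by simp
      show "\<exists>M. \<forall>m\<ge>M.
        (\<Sum>i<m. (if prime (dg ((gauss_map ^^ i) x)) then real (dg ((gauss_map ^^ i) x)) else 0))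
           \<le> (\<Sum>i<m. real (dg ((gauss_map ^^ i) x))) / 2^s
        \<and> 0 < (\<Sum>i<m. real (dg ((gauss_map ^^ i) x)))"
        using determ[OF x J20 nA] by blast
    qed
  qed
qed

lemma sum_conv:
  "real (\<Sum>k=1..n. cf_digit k x) = (\<Sum>i<n. real (dg ((gauss_map ^^ i) x)))"
  "real (\<Sum>k=1..n. prime_cf_digit k x) = (\<Sum>i<n. (if prime (dg ((gauss_map ^^ i) x)) then real (dg ((gauss_map ^^ i) x)) else 0))"
proof -
  have "(\<Sum>k=1..n. cf_digit k x) = (\<Sum>i<n. cf_digit (Suc i) x)"
    using sum.atLeast1_atMost_eq[of "\<lambda>k. cf_digit k x" n] by simp
  then show "real (\<Sum>k=1..n. cf_digit k x) = (\<Sum>i<n. real (dg ((gauss_map ^^ i) x)))"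
    by (simp add: cf_digit_eq)
  have "(\<Sum>k=1..n. prime_cf_digit k x) = (\<Sum>i<n. prime_cf_digit (Suc i) x)"
    using sum.atLeast1_atMost_eq[of "\<lambda>k. prime_cf_digit k x" n] by simp
  show "real (\<Sum>k=1..n. prime_cf_digit k x) = (\<Sum>i<n. (if prime (dg ((gauss_map ^^ i) x)) then real (dg ((gauss_map ^^ i) x)) else 0))"
  proof -
    have pc: "real (prime_cf_digit (Suc i) x) = (if prime (dg ((gauss_map ^^ i) x)) then real (dg ((gauss_map ^^ i) x)) else 0)" for i
      by (simp add: prime_cf_digit_def cf_digit_eq)
    show ?thesis using \<open>(\<Sum>k=1..n. prime_cf_digit k x) = (\<Sum>i<n. prime_cf_digit (Suc i) x)\<close>
      by (simp only: of_nat_sum pc)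
  qed
qed

theorem theorem2p8:
  shows "AE x in lborel. x \<in> {0<..1} \<longrightarrow>
    ((\<lambda>n. real (\<Sum>k=1..n. prime_cf_digit k x) / real (\<Sum>k=1..n. cf_digit k x))
       \<longlonglongrightarrow> 0)"
proof -
  have "AE x in lborel. \<forall>s::nat. x \<in> {0<..<1} \<longrightarrow> (\<exists>M. \<forall>m\<ge>M.
      (\<Sum>i<m. (if prime (dg ((gauss_map ^^ i) x)) then real (dg ((gauss_map ^^ i) x)) else 0))
           \<le> (\<Sum>i<m. real (dg ((gauss_map ^^ i) x))) / 2^s
      \<and> 0 < (\<Sum>i<m. real (dg ((gauss_map ^^ i) x))))"
    by (subst AE_all_countable) (rule allI, rule AE_s)
  moreover have "AE x in lborel. x \<noteq> (1::real)" by (rule AE_lborel_singleton)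
  ultimately show ?thesis
  proof eventually_elim
    case (elim x)
    show ?case
    proof
      assume "x \<in> {0<..1}"
      then have x: "x \<in> {0<..<1}" using elim by auto
      define P where "P m = (\<Sum>i<m. (if prime (dg ((gauss_map ^^ i) x)) then real (dg ((gauss_map ^^ i) x)) else 0))" for m
      define S where "S m = (\<Sum>i<m. real (dg ((gauss_map ^^ i) x)))" for m
      have H: "\<exists>M. \<forall>m\<ge>M. P m \<le> S m / 2^s \<and> 0 < S m" for s
        using elim x unfolding P_def S_def by blast
      have P0: "0 \<le> P m" for m unfolding P_def by (intro sum_nonneg) auto
      show "(\<lambda>n. real (\<Sum>k=1..n. prime_cf_digit k x) / real (\<Sum>k=1..n. cf_digit k x)) \<longlonglongrightarrow> 0"
        unfolding sum_conv P_def[symmetric] S_def[symmetric]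
      proof (rule LIMSEQ_I)
        fix r :: real assume r: "0 < r"
        obtain s where s: "(1/2::real)^s < r" using real_arch_pow_inv[OF r, of "1/2"] by auto
        obtain M where M: "\<And>m. m \<ge> M \<Longrightarrow> P m \<le> S m / 2^s \<and> 0 < S m" using H[of s] by blast
        show "\<exists>no. \<forall>n\<ge>no. norm (P n / S n - 0) < r"
        proof (intro exI allI impI)
          fix n assume n: "n \<ge> M"
          have Sp: "0 < S n" and Pl: "P n \<le> S n / 2^s" using M[OF n] by auto
          have "P n / S n \<le> (S n / 2^s) / S n" using Pl Sp by (intro divide_right_mono) auto
          also have "\<dots> = (1/2)^s" using Sp by (simp add: power_one_over)
          finally have "P n / S n < r" using s by simp
          moreover have "0 \<le> P n / S n" using P0 Sp by simp
          ultimately show "norm (P n / S n - 0) < r" by simp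
        qed
      qed
    qed
  qed
qed


end
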